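(* In the setting of the context, let $\tau_N:D(A)\to\mathbb C^n$ ($N\ge1$) and $\tau$ be maps as in the context, with $\tau_N\to\tau$ in the norm of bounded operators from $D(A)$ (graph norm) to $\mathbb C^n$. Let $\Pi$ be an orthogonal projector on $\mathbb C^n$ and $\Theta_N,\Theta$ symmetric operators on $\mathbb C^n_\Pi$ with $\Theta_N\to\Theta$. Let $A_N^{\Pi,\Theta_N}$ be the self-adjoint extension of $A|_{\ker\tau_N}$ constructed with $\tau_N$, and $A^{\Pi,\Theta}$ that of $A|_{\ker\tau}$ constructed with $\tau$. Then $A_N^{\Pi,\Theta_N}\to A^{\Pi,\Theta}$ in norm resolvent sense as $N\to\infty$.
   Context: $\mathcal H$ is a Hilbert space and $A$ a self-adjoint operator on $\mathcal H$ with $-A>0$ (so $0\in\rho(A)$). A map $\tau:D(A)\to\mathbb C^n$ ($n\ge1$) is admissible if it is linear, surjective, bounded for the graph norm of $A$, with $\ker\tau$ dense in $\mathcal H$; then $A|_{\ker\tau}$ is closed symmetric. For such $\tau$ and $z\in\rho(A)$ let $G_z:=(\tau(-A+\bar z)^{-1})^*:\mathbb C^n\to\mathcal H$. For an orthogonal projector $\Pi$ on $\mathbb C^n$ and a symmetric operator $\Theta$ on $\mathbb C^n_\Pi:=\mathrm{Ran}\,\Pi$, the extension constructed with $\tau$ is $A^{\Pi,\Theta}\phi:=A\phi_0$ on $D(A^{\Pi,\Theta}):=\{\phi=\phi_0+G_0\xi:\ \phi_0\in D(A),\ \xi\in\mathbb C^n_\Pi,\ \Pi\tau\phi_0=\Theta\xi\}$;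 it is self-adjoint and its resolvent is $(-A^{\Pi,\Theta}+z)^{-1}=(-A+z)^{-1}+G_z\Pi(\Theta+z\Pi G_0^*G_z\Pi)^{-1}\Pi G_{\bar z}^*$. All $\tau_N$ and $\tau$ are assumed admissible. *)

theory Defs
  imports "HOL-Analysis.Analysis"
begin

text \<open>A complex Hilbert space is modelled as a real Banach space type 'h together with
  a complex scalar multiplication sm (extending scaleR) and an inner product ip,
  conjugate-linear in the first and linear in the second argument, inducing the norm.\<close>

definition complex_hilbert :: "(complex \<Rightarrow> 'h::banach \<Rightarrow> 'h) \<Rightarrow> ('h \<Rightarrow> 'h \<Rightarrow> complex) \<Rightarrow> bool" where
  "complex_hilbert sm ip \<longleftrightarrow>
     (\<forall>a b x. sm a (sm b x) = sm (a * b) x) \<and> (\<forall>x. sm 1 x = x) \<and>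
     (\<forall>a x y. sm a (x + y) = sm a x + sm a y) \<and> (\<forall>a b x. sm (a + b) x = sm a x + sm b x) \<and>
     (\<forall>r x. sm (complex_of_real r) x = scaleR r x) \<and>
     (\<forall>x y z. ip x (y + z) = ip x y + ip x z) \<and> (\<forall>a x y. ip x (sm a y) = a * ip x y) \<and>
     (\<forall>x y. ip y x = cnj (ip x y)) \<and> (\<forall>x. ip x x = complex_of_real ((norm x)\<^sup>2))"

definition cinner_vec :: "complex ^ 'n::finite \<Rightarrow> complex ^ 'n \<Rightarrow> complex" where
  "cinner_vec x y = (\<Sum>i\<in>UNIV. cnj (x $ i) * y $ i)"

definition csubspace_on :: "(complex \<Rightarrow> 'h \<Rightarrow> 'h) \<Rightarrow> ('h::real_vector) set \<Rightarrow> bool" where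
  "csubspace_on sm D \<longleftrightarrow> 0 \<in> D \<and> (\<forall>x\<in>D. \<forall>y\<in>D. x + y \<in> D) \<and> (\<forall>a. \<forall>x\<in>D. sm a x \<in> D)"

definition self_adjoint_op :: "(complex \<Rightarrow> 'h \<Rightarrow> 'h) \<Rightarrow> ('h \<Rightarrow> 'h \<Rightarrow> complex) \<Rightarrow> ('h::real_normed_vector) set \<Rightarrow> ('h \<Rightarrow> 'h) \<Rightarrow> bool" where
  "self_adjoint_op sm ip D A \<longleftrightarrow>
     csubspace_on sm D \<and> closure D = UNIV \<and>
     (\<forall>x\<in>D. \<forall>y\<in>D. A (x + y) = A x + A y) \<and> (\<forall>a. \<forall>x\<in>D. A (sm a x) = sm a (A x)) \<and>
     (\<forall>x\<in>D. \<forall>y\<in>D. ip (A x) y = ip x (A y)) \<and>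
     {\<psi>. \<exists>\<eta>. \<forall>\<phi>\<in>D. ip (A \<phi>) \<psi> = ip \<phi> \<eta>} \<subseteq> D"

definition neg_strictly_positive :: "('h \<Rightarrow> 'h \<Rightarrow> complex) \<Rightarrow> ('h::real_normed_vector) set \<Rightarrow> ('h \<Rightarrow> 'h) \<Rightarrow> bool" where
  "neg_strictly_positive ip D A \<longleftrightarrow> (\<exists>c>0. \<forall>\<phi>\<in>D. c * (norm \<phi>)\<^sup>2 \<le> Re (ip \<phi> (- A \<phi>)))"

definition graph_norm :: "('h \<Rightarrow> 'h) \<Rightarrow> 'h::real_normed_vector \<Rightarrow> real" where
  "graph_norm A \<phi> = sqrt ((norm \<phi>)\<^sup>2 + (norm (A \<phi>))\<^sup>2)"

definition graph_op_norm :: "('h::real_normed_vector) set \<Rightarrow> ('h \<Rightarrow> 'h) \<Rightarrow> ('h \<Rightarrow> complex ^ 'n::finite) \<Rightarrow> real" where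
  "graph_op_norm D A f = Sup {norm (f \<phi>) | \<phi>. \<phi> \<in> D \<and> graph_norm A \<phi> \<le> 1}"

definition admissible :: "(complex \<Rightarrow> 'h \<Rightarrow> 'h) \<Rightarrow> ('h::real_normed_vector) set \<Rightarrow> ('h \<Rightarrow> 'h) \<Rightarrow> ('h \<Rightarrow> complex ^ 'n::finite) \<Rightarrow> bool" where
  "admissible sm D A \<tau> \<longleftrightarrow>
     (\<forall>x\<in>D. \<forall>y\<in>D. \<tau> (x + y) = \<tau> x + \<tau> y) \<and> (\<forall>a. \<forall>x\<in>D. \<tau> (sm a x) = a *s \<tau> x) \<and>
     \<tau> ` D = UNIV \<and>
     (\<exists>C. \<forall>\<phi>\<in>D. norm (\<tau> \<phi>) \<le> C * graph_norm A \<phi>) \<and>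
     closure {\<phi>\<in>D. \<tau> \<phi> = 0} = UNIV"

definition resolv :: "(complex \<Rightarrow> 'h \<Rightarrow> 'h) \<Rightarrow> ('h::real_vector) set \<Rightarrow> ('h \<Rightarrow> 'h) \<Rightarrow> complex \<Rightarrow> 'h \<Rightarrow> 'h" where
  "resolv sm D B z \<psi> = (THE \<phi>. \<phi> \<in> D \<and> sm z \<phi> - B \<phi> = \<psi>)"

text \<open>G_z = (\<tau> (-A + cnj z)^{-1})^* : C^n \<rightarrow> H.\<close>
definition Gmap :: "(complex \<Rightarrow> 'h \<Rightarrow> 'h) \<Rightarrow> ('h \<Rightarrow> 'h \<Rightarrow> complex) \<Rightarrow> ('h::real_vector) set \<Rightarrow> ('h \<Rightarrow> 'h)
     \<Rightarrow> ('h \<Rightarrow> complex ^ 'n::finite) \<Rightarrow> complex \<Rightarrow> complex ^ 'n \<Rightarrow> 'h" where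
  "Gmap sm ip D A \<tau> z \<xi> = (THE g. \<forall>\<psi>. ip g \<psi> = cinner_vec \<xi> (\<tau> (resolv sm D A (cnj z) \<psi>)))"

definition hermitian_mat :: "complex ^ 'n ^ 'n \<Rightarrow> bool" where
  "hermitian_mat M \<longleftrightarrow> (\<forall>i j. M $ i $ j = cnj (M $ j $ i))"

definition ortho_projector :: "complex ^ 'n ^ 'n \<Rightarrow> bool" where
  "ortho_projector P \<longleftrightarrow> P ** P = P \<and> hermitian_mat P"

text \<open>A symmetric operator on Ran P, encoded as the hermitian matrix \<Theta> with P \<Theta> = \<Theta> = \<Theta> P
  (i.e. the operator on Ran P extended by 0 on its orthogonal complement).\<close>
definition symmetric_on_ran :: "complex ^ 'n ^ 'n \<Rightarrow> complex ^ 'n ^ 'n \<Rightarrow> bool" where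
  "symmetric_on_ran P \<Theta> \<longleftrightarrow> hermitian_mat \<Theta> \<and> P ** \<Theta> = \<Theta> \<and> \<Theta> ** P = \<Theta>"

definition ext_dom :: "(complex \<Rightarrow> 'h \<Rightarrow> 'h) \<Rightarrow> ('h \<Rightarrow> 'h \<Rightarrow> complex) \<Rightarrow> ('h::real_vector) set \<Rightarrow> ('h \<Rightarrow> 'h)
     \<Rightarrow> ('h \<Rightarrow> complex ^ 'n::finite) \<Rightarrow> complex ^ 'n ^ 'n \<Rightarrow> complex ^ 'n ^ 'n \<Rightarrow> 'h set" where
  "ext_dom sm ip D A \<tau> P \<Theta> =
     {\<phi>0 + Gmap sm ip D A \<tau> 0 \<xi> | \<phi>0 \<xi>. \<phi>0 \<in> D \<and> P *v \<xi> = \<xi> \<and> P *v \<tau> \<phi>0 = \<Theta> *v \<xi>}"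

definition ext_op :: "(complex \<Rightarrow> 'h \<Rightarrow> 'h) \<Rightarrow> ('h \<Rightarrow> 'h \<Rightarrow> complex) \<Rightarrow> ('h::real_vector) set \<Rightarrow> ('h \<Rightarrow> 'h)
     \<Rightarrow> ('h \<Rightarrow> complex ^ 'n::finite) \<Rightarrow> complex ^ 'n ^ 'n \<Rightarrow> complex ^ 'n ^ 'n \<Rightarrow> 'h \<Rightarrow> 'h" where
  "ext_op sm ip D A \<tau> P \<Theta> \<phi> =
     A (SOME \<phi>0. \<phi>0 \<in> D \<and> (\<exists>\<xi>. P *v \<xi> = \<xi> \<and> P *v \<tau> \<phi>0 = \<Theta> *v \<xi> \<and> \<phi> = \<phi>0 + Gmap sm ip D A \<tau> 0 \<xi>))"

definition norm_resolvent_conv :: "(complex \<Rightarrow> 'h \<Rightarrow> 'h) \<Rightarrow> (nat \<Rightarrow> ('h::real_normed_vector) set) \<Rightarrow> (nat \<Rightarrow> 'h \<Rightarrow> 'h)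
     \<Rightarrow> 'h set \<Rightarrow> ('h \<Rightarrow> 'h) \<Rightarrow> bool" where
  "norm_resolvent_conv sm DN BN D B \<longleftrightarrow>
     (\<forall>z. Im z \<noteq> 0 \<longrightarrow>
        (\<lambda>N. onorm (\<lambda>\<psi>. resolv sm (DN N) (BN N) z \<psi> - resolv sm D B z \<psi>)) \<longlonglongrightarrow> 0)"

end

theory Submission
  imports Defs
begin


locale HS =
  fixes sm :: "complex \<Rightarrow> 'h::banach \<Rightarrow> 'h" and ip :: "'h \<Rightarrow> 'h \<Rightarrow> complex"
  assumes CH: "complex_hilbert sm ip"
begin

lemmas CHD = CH[unfolded complex_hilbert_def]

lemma sm_assoc: "sm a (sm b x) = sm (a * b) x" by (rule conjunct1[OF CHD, rule_format])
lemma sm_one[simp]: "sm 1 x = x" by (rule conjunct1[OF conjunct2[OF CHD], rule_format])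
lemma sm_add_right: "sm a (x + y) = sm a x + sm a y" by (rule conjunct1[OF conjunct2[OF conjunct2[OF CHD]], rule_format])
lemma sm_add_left: "sm (a + b) x = sm a x + sm b x" by (rule conjunct1[OF conjunct2[OF conjunct2[OF conjunct2[OF CHD]]], rule_format])
lemma sm_real: "sm (complex_of_real r) x = scaleR r x" by (rule conjunct1[OF conjunct2[OF conjunct2[OF conjunct2[OF conjunct2[OF CHD]]]], rule_format])
lemma ip_add_right: "ip x (y + z) = ip x y + ip x z" by (rule conjunct1[OF conjunct2[OF conjunct2[OF conjunct2[OF conjunct2[OF conjunct2[OF CHD]]]]], rule_format])
lemma ip_sm_right: "ip x (sm a y) = a * ip x y" by (rule conjunct1[OF conjunct2[OF conjunct2[OF conjunct2[OF conjunct2[OF conjunct2[OF conjunct2[OF CHD]]]]]], rule_format])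
lemma ip_cnj: "ip y x = cnj (ip x y)" by (rule conjunct1[OF conjunct2[OF conjunct2[OF conjunct2[OF conjunct2[OF conjunct2[OF conjunct2[OF conjunct2[OF CHD]]]]]]], rule_format])
lemma ip_self: "ip x x = complex_of_real ((norm x)\<^sup>2)" by (rule conjunct2[OF conjunct2[OF conjunct2[OF conjunct2[OF conjunct2[OF conjunct2[OF conjunct2[OF conjunct2[OF CHD]]]]]]], rule_format])

lemma sm_zero_left[simp]: "sm 0 x = 0"
  using sm_real[of 0 x] by simp
lemma sm_zero_right[simp]: "sm a 0 = 0"
  using sm_add_right[of a 0 0] by simp
lemma sm_minus_right: "sm a (- x) = - sm a x"
proof -
  have "sm a x + sm a (-x) = 0" using sm_add_right[of a x "-x"] by simp
  from add.inverse_unique[OF this] show ?thesis by simp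
qed
lemma sm_diff_right: "sm a (x - y) = sm a x - sm a y"
  using sm_add_right[of a x "-y"] sm_minus_right by simp
lemma sm_minus_left: "sm (- a) x = - sm a x"
proof -
  have "sm a x + sm (-a) x = 0" using sm_add_left[of a "-a" x] by simp
  from add.inverse_unique[OF this] show ?thesis by simp
qed
lemma sm_diff_left: "sm (a - b) x = sm a x - sm b x"
  using sm_add_left[of a "-b" x] sm_minus_left by simp

lemma ip_zero_right[simp]: "ip x 0 = 0"
  using ip_add_right[of x 0 0] by simp
lemma ip_minus_right: "ip x (- y) = - ip x y"
proof -
  have "ip x y + ip x (-y) = 0" using ip_add_right[of x y "-y"] by simp
  from add.inverse_unique[OF this] show ?thesis by simp
qed
lemma ip_diff_right: "ip x (y - z) = ip x y - ip x z"
  using ip_add_right[of x y "-z"] ip_minus_right by simp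
lemma ip_add_left: "ip (x + y) z = ip x z + ip y z"
  using ip_cnj[of "x+y" z] ip_cnj[of x z] ip_cnj[of y z] ip_add_right[of z x y] by simp
lemma ip_zero_left[simp]: "ip 0 x = 0"
  using ip_cnj[of 0 x] by simp
lemma ip_minus_left: "ip (- x) y = - ip x y"
  using ip_cnj[of "-x" y] ip_cnj[of x y] ip_minus_right[of y x] by simp
lemma ip_diff_left: "ip (x - y) z = ip x z - ip y z"
  using ip_cnj[of "x-y" z] ip_cnj[of x z] ip_cnj[of y z] ip_diff_right[of z x y] by simp
lemma ip_sm_left: "ip (sm a x) y = cnj a * ip x y"
  using ip_cnj[of "sm a x" y] ip_cnj[of x y] ip_sm_right[of y a x] by simp
lemma ip_scaleR_right: "ip x (scaleR r y) = complex_of_real r * ip x y"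
  using ip_sm_right[of x "complex_of_real r" y] sm_real[of r y] by simp
lemma ip_scaleR_left: "ip (scaleR r x) y = complex_of_real r * ip x y"
  using ip_sm_left[of "complex_of_real r" x y] sm_real[of r x] by simp
lemma ip_sum_right: "ip x (sum f S) = (\<Sum>i\<in>S. ip x (f i))"
  by (induction S rule: infinite_finite_induct) (auto simp: ip_add_right)

lemma Re_ip_self: "Re (ip x x) = (norm x)\<^sup>2" by (simp add: ip_self)
lemma Im_ip_self: "Im (ip x x) = 0" by (simp add: ip_self)

lemma ip_self_eq0: "ip x x = 0 \<longleftrightarrow> x = 0"
  by (simp add: ip_self)

lemma norm_sq_add: "(norm (x + y))\<^sup>2 = (norm x)\<^sup>2 + (norm y)\<^sup>2 + 2 * Re (ip x y)"
proof -
  have "ip (x+y) (x+y) = ip x x + ip x y + ip y x + ip y y"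
    by (simp add: ip_add_left ip_add_right)
  then have "Re (ip (x+y) (x+y)) = Re (ip x x) + Re (ip x y) + Re (ip y x) + Re (ip y y)" by simp
  moreover have "Re (ip y x) = Re (ip x y)" by (subst ip_cnj) simp
  ultimately show ?thesis by (simp add: Re_ip_self)
qed

lemma norm_sq_diff: "(norm (x - y))\<^sup>2 = (norm x)\<^sup>2 + (norm y)\<^sup>2 - 2 * Re (ip x y)"
  using norm_sq_add[of x "-y"] by (simp add: ip_minus_right)

lemma Re_ip_le: "Re (ip x y) \<le> norm x * norm y"
proof -
  have a: "norm (x - y) \<ge> \<bar>norm x - norm y\<bar>" by (rule norm_triangle_ineq3)
  have "(norm (x - y))\<^sup>2 \<ge> (norm x - norm y)\<^sup>2"
    using a abs_le_square_iff[of "norm x - norm y" "norm (x - y)"] by simp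
  then show ?thesis using norm_sq_diff[of x y] by (simp add: power2_eq_square algebra_simps)
qed

lemma norm_sm: "norm (sm a x) = cmod a * norm x"
proof -
  have "ip (sm a x) (sm a x) = cnj a * a * ip x x" by (simp add: ip_sm_left ip_sm_right)
  also have "cnj a * a = complex_of_real ((cmod a)\<^sup>2)" by (metis complex_norm_square mult.commute of_real_power)
  finally have "complex_of_real ((norm (sm a x))\<^sup>2) = complex_of_real ((cmod a)\<^sup>2 * (norm x)\<^sup>2)"
    by (simp add: ip_self)
  then have "(norm (sm a x))\<^sup>2 = (cmod a * norm x)\<^sup>2"
    unfolding of_real_eq_iff by (simp add: power_mult_distrib)
  then show ?thesis
    by (rule power2_eq_imp_eq) auto
qed

lemma ip_bound: "cmod (ip x y) \<le> norm x * norm y"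
proof (cases "ip x y = 0")
  case True then show ?thesis by simp
next
  case False
  define u where "u = cnj (ip x y) / cmod (ip x y)"
  have cu: "cmod u = 1" using False by (simp add: u_def norm_divide)
  have "ip x (sm u y) = u * ip x y" by (simp add: ip_sm_right)
  also have "\<dots> = complex_of_real (cmod (ip x y))"
  proof -
    have "cnj (ip x y) * ip x y = complex_of_real ((cmod (ip x y))\<^sup>2)"
      by (metis complex_norm_square mult.commute of_real_power)
    then show ?thesis using False by (simp add: u_def power2_eq_square)
  qed
  finally have "cmod (ip x y) = Re (ip x (sm u y))" by simp
  also have "\<dots> \<le> norm x * norm (sm u y)" by (rule Re_ip_le)
  also have "\<dots> = norm x * norm y" by (simp add: norm_sm cu)
  finally show ?thesis .
qed

lemma bounded_linear_ip_right: "bounded_linear (ip x)"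
proof
  show "ip x (a + b) = ip x a + ip x b" for a b by (rule ip_add_right)
  show "ip x (r *\<^sub>R b) = r *\<^sub>R ip x b" for r b by (simp add: ip_scaleR_right scaleR_conv_of_real)
  show "\<exists>K. \<forall>y. norm (ip x y) \<le> norm y * K"
    by (rule exI[of _ "norm x"]) (metis ip_bound mult.commute)
qed

lemma continuous_ip_right: "continuous_on UNIV (ip x)"
  using bounded_linear_ip_right linear_continuous_on by blast

lemma tendsto_ip_right: "(f \<longlongrightarrow> l) F \<Longrightarrow> ((\<lambda>n. ip x (f n)) \<longlongrightarrow> ip x l) F"
  using bounded_linear.tendsto[OF bounded_linear_ip_right] .

lemma orth_dense_zero:
  assumes "closure S = UNIV" "\<And>s. s \<in> S \<Longrightarrow> ip v s = 0"
  shows "v = 0"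
proof -
  have "closed {y. ip v y = 0}"
    using continuous_closed_preimage_constant[OF continuous_ip_right closed_UNIV, of v 0] by simp
  moreover have "S \<subseteq> {y. ip v y = 0}" using assms(2) by auto
  ultimately have "closure S \<subseteq> {y. ip v y = 0}" by (rule closure_minimal[rotated])
  then have "ip v v = 0" using assms(1) by auto
  then show ?thesis by (simp add: ip_self_eq0)
qed

lemma ip_eq_all: "(\<And>y. ip v y = 0) \<Longrightarrow> v = 0"
  using ip_self_eq0 by blast

end



context HS begin

lemma csub_scaleR: "csubspace_on sm M \<Longrightarrow> x \<in> M \<Longrightarrow> scaleR r x \<in> M"
  unfolding csubspace_on_def by (metis sm_real)
lemma csub_add: "csubspace_on sm M \<Longrightarrow> x \<in> M \<Longrightarrow> y \<in> M \<Longrightarrow> x + y \<in> M"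
  unfolding csubspace_on_def by blast
lemma csub_sm: "csubspace_on sm M \<Longrightarrow> x \<in> M \<Longrightarrow> sm a x \<in> M"
  unfolding csubspace_on_def by blast
lemma csub_zero: "csubspace_on sm M \<Longrightarrow> 0 \<in> M"
  unfolding csubspace_on_def by blast
lemma csub_minus: "csubspace_on sm M \<Longrightarrow> x \<in> M \<Longrightarrow> - x \<in> M"
  using csub_scaleR[of M x "-1"] by simp
lemma csub_diff: "csubspace_on sm M \<Longrightarrow> x \<in> M \<Longrightarrow> y \<in> M \<Longrightarrow> x - y \<in> M"
  using csub_add[of M x "-y"] csub_minus[of M y] by simp

lemma parallelogram: fixes a b :: 'h shows "(norm (a + b))\<^sup>2 + (norm (a - b))\<^sup>2 = 2 * (norm a)\<^sup>2 + 2 * (norm b)\<^sup>2"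
  using norm_sq_add[of a b] norm_sq_diff[of a b] by simp

lemma min_orth:
  assumes M: "csubspace_on sm M" and min: "\<And>m. m \<in> M \<Longrightarrow> norm w \<le> norm (w - m)"
    and m: "m \<in> M"
  shows "ip w m = 0"
proof -
  have re: "Re (ip w v) = 0" if v: "v \<in> M" for v
  proof (cases "v = 0")
    case True then show ?thesis by simp
  next
    case False
    define r where "r = Re (ip w v)"
    define t where "t = r / (norm v)\<^sup>2"
    have nv: "(norm v)\<^sup>2 > 0" using False by simp
    have "norm w \<le> norm (w - scaleR t v)" using min csub_scaleR[OF M v] by blast
    then have "(norm w)\<^sup>2 \<le> (norm (w - scaleR t v))\<^sup>2" by (simp add: power_mono)
    also have "\<dots> = (norm w)\<^sup>2 + t\<^sup>2 * (norm v)\<^sup>2 - 2 * t * r"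
      by (simp add: norm_sq_diff ip_scaleR_right r_def power_mult_distrib)
    finally have "2 * t * r \<le> t\<^sup>2 * (norm v)\<^sup>2" by simp
    moreover have "2 * t * r = 2 * (r\<^sup>2 / (norm v)\<^sup>2)" by (simp add: t_def power2_eq_square)
    moreover have "t\<^sup>2 * (norm v)\<^sup>2 = r\<^sup>2 / (norm v)\<^sup>2"
      using nv by (simp add: t_def power2_eq_square)
    ultimately have "r\<^sup>2 / (norm v)\<^sup>2 \<le> 0" by simp
    then have "r\<^sup>2 \<le> 0" using nv by (simp add: divide_le_0_iff)
    then show ?thesis by (simp add: r_def)
  qed
  have "Re (ip w m) = 0" using re m by blast
  moreover have "Re (ip w (sm \<i> m)) = 0" using re csub_sm[OF M m] by blast
  then have "Im (ip w m) = 0" by (simp add: ip_sm_right)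
  ultimately show ?thesis by (simp add: complex_eq_iff)
qed

lemma projection:
  assumes M: "csubspace_on sm M" and cl: "closed M"
  shows "\<exists>p\<in>M. \<forall>m\<in>M. ip (y - p) m = 0"
proof -
  define S where "S = (\<lambda>m. (norm (y - m))\<^sup>2) ` M"
  define d where "d = Inf S"
  have Sne: "S \<noteq> {}" using csub_zero[OF M] by (auto simp: S_def)
  have Sbdd: "bdd_below S" unfolding S_def by (rule bdd_belowI[of _ 0]) auto
  have dle: "d \<le> (norm (y - m))\<^sup>2" if "m \<in> M" for m
    unfolding d_def using cInf_lower[OF _ Sbdd] that by (auto simp: S_def)
  have d0: "0 \<le> d" unfolding d_def by (rule cInf_greatest[OF Sne]) (auto simp: S_def)
  have "\<exists>m\<in>M. (norm (y - m))\<^sup>2 < d + 1 / (real k + 1)" for k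
  proof -
    have "Inf S < d + 1 / (real k + 1)" unfolding d_def by (simp add: add_pos_pos)
    from cInf_lessD[OF Sne this] show ?thesis by (auto simp: S_def)
  qed
  then obtain ms where msM: "\<And>k. ms k \<in> M" and msd: "\<And>k. (norm (y - ms k))\<^sup>2 < d + 1 / (real k + 1)"
    by metis
  have cauchy_bound: "(norm (ms k - ms l))\<^sup>2 \<le> 2 / (real k + 1) + 2 / (real l + 1)" for k l
  proof -
    have mid: "scaleR (1/2) (ms k + ms l) \<in> M" using csub_scaleR[OF M csub_add[OF M msM msM]] .
    have "y - ms k + (y - ms l) = scaleR 2 (y - scaleR (1/2) (ms k + ms l))"
      by (simp add: algebra_simps scaleR_2)
    then have "(norm (y - ms k + (y - ms l)))\<^sup>2 = 4 * (norm (y - scaleR (1/2) (ms k + ms l)))\<^sup>2"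
      by (simp add: power_mult_distrib)
    then have h1: "(norm (y - ms k + (y - ms l)))\<^sup>2 \<ge> 4 * d" using dle[OF mid] by simp
    have "(y - ms k) - (y - ms l) = ms l - ms k" by simp
    then have "(norm (ms k - ms l))\<^sup>2 = (norm ((y - ms k) - (y - ms l)))\<^sup>2" by (simp add: norm_minus_commute)
    also have "\<dots> = 2 * (norm (y - ms k))\<^sup>2 + 2 * (norm (y - ms l))\<^sup>2 - (norm (y - ms k + (y - ms l)))\<^sup>2"
      using parallelogram[of "y - ms k" "y - ms l"] by simp
    also have "\<dots> \<le> 2 / (real k + 1) + 2 / (real l + 1)"
      using h1 msd[of k] msd[of l] by simp
    finally show ?thesis .
  qed
  have "Cauchy ms"
  proof (rule metric_CauchyI)
    fix e :: real assume e: "e > 0"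
    obtain K :: nat where K: "4 / e\<^sup>2 < real K" using reals_Archimedean2 by blast
    show "\<exists>K. \<forall>m\<ge>K. \<forall>n\<ge>K. dist (ms m) (ms n) < e"
    proof (intro exI allI impI)
      fix m n assume mK: "K \<le> m" and nK: "K \<le> n"
      have e2: "e\<^sup>2 > 0" using e by simp
      have a: "2 / (real m + 1) < e\<^sup>2 / 2"
      proof -
        have "4 / e\<^sup>2 < real m + 1" using K mK by linarith
        then have "4 < e\<^sup>2 * (real m + 1)" using e2 by (simp add: field_simps)
        then show ?thesis by (simp add: field_simps)
      qed
      have b: "2 / (real n + 1) < e\<^sup>2 / 2"
      proof -
        have "4 / e\<^sup>2 < real n + 1" using K nK by linarith
        then have "4 < e\<^sup>2 * (real n + 1)" using e2 by (simp add: field_simps)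
        then show ?thesis by (simp add: field_simps)
      qed
      have "(norm (ms m - ms n))\<^sup>2 < e\<^sup>2" using cauchy_bound[of m n] a b by linarith
      then have "norm (ms m - ms n) < e" using e by (simp add: power_less_imp_less_base)
      then show "dist (ms m) (ms n) < e" by (simp add: dist_norm)
    qed
  qed
  then obtain p where lim: "ms \<longlonglongrightarrow> p" using convergent_eq_Cauchy by blast
  have pM: "p \<in> M" using closed_sequentially[OF cl] msM lim by blast
  have limn: "(\<lambda>k. (norm (y - ms k))\<^sup>2) \<longlonglongrightarrow> (norm (y - p))\<^sup>2"
    by (intro tendsto_intros lim)
  have l0: "(\<lambda>k. 1 / (real k + 1)) \<longlonglongrightarrow> 0"
    using LIMSEQ_inverse_real_of_nat by (simp add: inverse_eq_divide add.commute)
  have lim2: "(\<lambda>k. d + 1 / (real k + 1)) \<longlonglongrightarrow> d + 0"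
    by (intro tendsto_intros l0)
  have "(norm (y - p))\<^sup>2 \<le> d + 0"
    by (rule LIMSEQ_le[OF limn lim2]) (use msd less_imp_le in blast)
  then have pmin: "norm (y - p) \<le> norm (y - p - m)" if "m \<in> M" for m
  proof -
    have "p + m \<in> M" using csub_add[OF M pM that] .
    then have "d \<le> (norm (y - p - m))\<^sup>2" using dle by (simp add: diff_diff_eq)
    then have "(norm (y - p))\<^sup>2 \<le> (norm (y - p - m))\<^sup>2" using \<open>(norm (y - p))\<^sup>2 \<le> d + 0\<close> by linarith
    then show ?thesis by (rule power2_le_imp_le) simp
  qed
  show ?thesis using min_orth[OF M pmin] pM by blast
qed

lemma riesz:
  assumes add: "\<And>x y. f (x + y) = f x + f y" and hom: "\<And>a x. f (sm a x) = a * f x"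
    and bnd: "\<And>x. cmod (f x) \<le> C * norm x"
  shows "\<exists>g. \<forall>x. ip g x = f x"
proof (cases "\<forall>x. f x = 0")
  case True then show ?thesis by (intro exI[of _ 0]) simp
next
  case False
  then obtain y where fy: "f y \<noteq> 0" by blast
  have f0: "f 0 = 0" using hom[of 0 0] by simp
  have bl: "bounded_linear f"
  proof
    show "f (x + y) = f x + f y" for x y by (rule add)
    show "f (r *\<^sub>R x) = r *\<^sub>R f x" for r x using hom[of "complex_of_real r" x] by (simp add: sm_real scaleR_conv_of_real)
    show "\<exists>K. \<forall>x. norm (f x) \<le> norm x * K" using bnd by (metis mult.commute)
  qed
  define K where "K = {x. f x = 0}"
  have KS: "csubspace_on sm K" unfolding csubspace_on_def K_def using f0 add hom by auto
  have Kc: "closed K" unfolding K_def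
    using continuous_closed_preimage_constant[OF linear_continuous_on[OF bl] closed_UNIV, of 0] by simp
  obtain p where pK: "p \<in> K" and orth: "\<And>m. m \<in> K \<Longrightarrow> ip (y - p) m = 0"
    using projection[OF KS Kc, of y] by blast
  define w where "w = y - p"
  have fw: "f w = f y" using pK add[of w p] by (simp add: K_def w_def)
  then have w0: "w \<noteq> 0" using fy f0 by auto
  define g where "g = sm (cnj (f w) / complex_of_real ((norm w)\<^sup>2)) w"
  have "ip g x = f x" for x
  proof -
    have "f (sm (f x) w - sm (f w) x) = 0"
    proof -
      have h1: "sm (f x) w - sm (f w) x = sm (f x) w + sm (- f w) x" by (simp add: sm_minus_left)
      have "f (sm (f x) w + sm (- f w) x) = f x * f w + (- f w) * f x" by (simp only: add hom)
      then have h2: "f (sm (f x) w + sm (- f w) x) = 0" by (simp add: mult.commute)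
      show ?thesis by (subst h1) (rule h2)
    qed
    then have "ip w (sm (f x) w - sm (f w) x) = 0" using orth by (simp add: K_def w_def)
    then have "f x * complex_of_real ((norm w)\<^sup>2) = f w * ip w x"
      by (simp add: ip_diff_right ip_sm_right ip_self)
    then show ?thesis using w0 by (simp add: g_def ip_sm_left field_simps)
  qed
  then show ?thesis by blast
qed

end



locale SA = HS sm ip for sm :: "complex \<Rightarrow> 'h::banach \<Rightarrow> 'h" and ip +
  fixes D :: "'h set" and A :: "'h \<Rightarrow> 'h"
  assumes SAop: "self_adjoint_op sm ip D A"
    and POS: "neg_strictly_positive ip D A"
begin

lemma Dsub: "csubspace_on sm D" using SAop unfolding self_adjoint_op_def by blast
lemma Ddense: "closure D = UNIV" using SAop unfolding self_adjoint_op_def by blast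
lemma A_add: "x \<in> D \<Longrightarrow> y \<in> D \<Longrightarrow> A (x + y) = A x + A y" using SAop unfolding self_adjoint_op_def by blast
lemma A_sm: "x \<in> D \<Longrightarrow> A (sm a x) = sm a (A x)" using SAop unfolding self_adjoint_op_def by blast
lemma A_sym: "x \<in> D \<Longrightarrow> y \<in> D \<Longrightarrow> ip (A x) y = ip x (A y)" using SAop unfolding self_adjoint_op_def by blast
lemma A_adj: "(\<And>\<phi>. \<phi> \<in> D \<Longrightarrow> ip (A \<phi>) \<psi> = ip \<phi> \<eta>) \<Longrightarrow> \<psi> \<in> D"
  using SAop unfolding self_adjoint_op_def by blast

lemma D0: "0 \<in> D" using csub_zero[OF Dsub] .
lemma Dadd: "x \<in> D \<Longrightarrow> y \<in> D \<Longrightarrow> x + y \<in> D" using csub_add[OF Dsub] .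
lemma Ddiff: "x \<in> D \<Longrightarrow> y \<in> D \<Longrightarrow> x - y \<in> D" using csub_diff[OF Dsub] .
lemma Dminus: "x \<in> D \<Longrightarrow> - x \<in> D" using csub_minus[OF Dsub] .
lemma Dsm: "x \<in> D \<Longrightarrow> sm a x \<in> D" using csub_sm[OF Dsub] .
lemma DscaleR: "x \<in> D \<Longrightarrow> scaleR r x \<in> D" using csub_scaleR[OF Dsub] .

lemma A0: "A 0 = 0" using A_sm[OF D0, of 0] by simp
lemma A_minus: "x \<in> D \<Longrightarrow> A (- x) = - A x"
  using A_sm[of x "-1"] by (simp add: sm_minus_left)
lemma A_diff: "x \<in> D \<Longrightarrow> y \<in> D \<Longrightarrow> A (x - y) = A x - A y"
  using A_add[of x "-y"] A_minus[of y] Dminus[of y] by simp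
lemma A_scaleR: "x \<in> D \<Longrightarrow> A (scaleR r x) = scaleR r (A x)"
  using A_sm[of x "complex_of_real r"] by (simp add: sm_real)

lemma ip_A_real: "x \<in> D \<Longrightarrow> Im (ip x (A x)) = 0"
proof -
  assume x: "x \<in> D"
  have "ip x (A x) = ip (A x) x" using A_sym[OF x x] by simp
  also have "\<dots> = cnj (ip x (A x))" by (rule ip_cnj)
  finally have h: "ip x (A x) = cnj (ip x (A x))" .
  show ?thesis using arg_cong[OF h, of Im] by simp
qed

definition good :: "complex \<Rightarrow> bool" where
  "good w \<longleftrightarrow> (\<exists>\<delta>>0. \<forall>\<phi>\<in>D. \<delta> * norm \<phi> \<le> norm (sm w \<phi> - A \<phi>))"

lemma good_Im: assumes "Im w \<noteq> 0" shows "good w"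
  unfolding good_def
proof (intro exI[of _ "\<bar>Im w\<bar>"] conjI ballI)
  show "0 < \<bar>Im w\<bar>" using assms by simp
  fix \<phi> assume p: "\<phi> \<in> D"
  have "ip \<phi> (sm w \<phi> - A \<phi>) = w * complex_of_real ((norm \<phi>)\<^sup>2) - ip \<phi> (A \<phi>)"
    by (simp add: ip_diff_right ip_sm_right ip_self)
  then have "Im (ip \<phi> (sm w \<phi> - A \<phi>)) = Im w * (norm \<phi>)\<^sup>2"
    using ip_A_real[OF p] by simp
  then have "\<bar>Im w\<bar> * (norm \<phi>)\<^sup>2 \<le> cmod (ip \<phi> (sm w \<phi> - A \<phi>))"
    using abs_Im_le_cmod[of "ip \<phi> (sm w \<phi> - A \<phi>)"] by (simp add: abs_mult)
  also have "\<dots> \<le> norm \<phi> * norm (sm w \<phi> - A \<phi>)" by (rule ip_bound)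
  finally have h: "\<bar>Im w\<bar> * (norm \<phi>)\<^sup>2 \<le> norm \<phi> * norm (sm w \<phi> - A \<phi>)" .
  show "\<bar>Im w\<bar> * norm \<phi> \<le> norm (sm w \<phi> - A \<phi>)"
  proof (cases "\<phi> = 0")
    case True then show ?thesis using A0 by simp
  next
    case False
    then have "norm \<phi> > 0" by simp
    with h show ?thesis by (simp add: power2_eq_square mult.assoc mult.left_commute[of "norm \<phi>"])
  qed
qed

lemma good_0: "good 0"
proof -
  obtain c where c: "c > 0" and cp: "\<And>\<phi>. \<phi> \<in> D \<Longrightarrow> c * (norm \<phi>)\<^sup>2 \<le> Re (ip \<phi> (- A \<phi>))"
    using POS unfolding neg_strictly_positive_def by blast
  show ?thesis unfolding good_def
  proof (intro exI[of _ c] conjI ballI)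
    show "0 < c" by fact
    fix \<phi> assume p: "\<phi> \<in> D"
    have "c * (norm \<phi>)\<^sup>2 \<le> norm \<phi> * norm (- A \<phi>)"
      using cp[OF p] Re_ip_le[of \<phi> "- A \<phi>"] by linarith
    then show "c * norm \<phi> \<le> norm (sm 0 \<phi> - A \<phi>)"
    proof (cases "\<phi> = 0")
      case True then show ?thesis using A0 by simp
    next
      case False
      then have "norm \<phi> > 0" by simp
      with \<open>c * (norm \<phi>)\<^sup>2 \<le> norm \<phi> * norm (- A \<phi>)\<close> show ?thesis
        by (simp add: power2_eq_square mult.assoc mult.left_commute[of "norm \<phi>"])
    qed
  qed
qed

definition OK :: "complex \<Rightarrow> bool" where "OK w \<longleftrightarrow> Im w \<noteq> 0 \<or> w = 0"

lemma OK_good: "OK w \<Longrightarrow> good w" using good_Im good_0 unfolding OK_def by blast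
lemma OK_cnj: "OK w \<Longrightarrow> OK (cnj w)" unfolding OK_def by auto

lemma sm_bl: "bounded_linear (sm w)"
proof
  show "sm w (x + y) = sm w x + sm w y" for x y by (rule sm_add_right)
  show "sm w (r *\<^sub>R x) = r *\<^sub>R sm w x" for r x
    by (simp add: sm_real[symmetric] sm_assoc mult.commute)
  show "\<exists>K. \<forall>x. norm (sm w x) \<le> norm x * K" by (rule exI[of _ "cmod w"]) (simp add: norm_sm mult.commute)
qed

lemma good_closed_range:
  assumes g: "good w"
  shows "closed {sm w \<phi> - A \<phi> | \<phi>. \<phi> \<in> D}"
proof -
  obtain \<delta> where d: "\<delta> > 0" and db0: "\<forall>\<phi>\<in>D. \<delta> * norm \<phi> \<le> norm (sm w \<phi> - A \<phi>)"
    using g unfolding good_def by auto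
  have db: "\<And>\<phi>. \<phi> \<in> D \<Longrightarrow> \<delta> * norm \<phi> \<le> norm (sm w \<phi> - A \<phi>)" using db0 by simp
  show ?thesis unfolding closed_sequential_limits
  proof (intro allI impI, elim conjE)
    fix x l assume xs: "\<forall>n. x n \<in> {sm w \<phi> - A \<phi> |\<phi>. \<phi> \<in> D}" and lim: "x \<longlonglongrightarrow> l"
    then have "\<forall>n. \<exists>\<phi>. \<phi> \<in> D \<and> x n = sm w \<phi> - A \<phi>" by blast
    from choice[OF this] obtain f where f: "\<forall>n. f n \<in> D \<and> x n = sm w (f n) - A (f n)" by blast
    have fD: "\<And>n. f n \<in> D" and fx: "\<And>n. x n = sm w (f n) - A (f n)" using f by auto
    have fdiff: "\<delta> * norm (f m - f n) \<le> norm (x m - x n)" for m n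
    proof -
      have "sm w (f m - f n) - A (f m - f n) = x m - x n"
        unfolding A_diff[OF fD[of m] fD[of n]] sm_diff_right fx by (simp add: algebra_simps)
      then show ?thesis using db[OF Ddiff[OF fD[of m] fD[of n]]] by simp
    qed
    have "Cauchy f"
    proof (rule metric_CauchyI)
      fix e :: real assume e: "e > 0"
      have "Cauchy x" using lim LIMSEQ_imp_Cauchy by blast
      then obtain M where M: "\<And>m n. m \<ge> M \<Longrightarrow> n \<ge> M \<Longrightarrow> dist (x m) (x n) < \<delta> * e"
        using d e unfolding Cauchy_def by (meson mult_pos_pos)
      show "\<exists>M. \<forall>m\<ge>M. \<forall>n\<ge>M. dist (f m) (f n) < e"
      proof (intro exI allI impI)
        fix m n assume "m \<ge> M" "n \<ge> M"
        then have "norm (x m - x n) < \<delta> * e" using M by (simp add: dist_norm)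
        then have "\<delta> * norm (f m - f n) < \<delta> * e" using fdiff[of m n] by linarith
        then show "dist (f m) (f n) < e" using d by (simp add: dist_norm)
      qed
    qed
    then obtain \<phi> where flim: "f \<longlonglongrightarrow> \<phi>" using convergent_eq_Cauchy by blast
    have key: "ip (A q) \<phi> = ip q (sm w \<phi> - l)" if c: "q \<in> D" for q
    proof -
      have e: "ip (A q) (f n) = ip q (sm w (f n) - x n)" for n
        using A_sym[OF c fD] fx[of n] by simp
      have l1: "(\<lambda>n. ip (A q) (f n)) \<longlonglongrightarrow> ip (A q) \<phi>" by (rule tendsto_ip_right[OF flim])
      have "(\<lambda>n. sm w (f n) - x n) \<longlonglongrightarrow> sm w \<phi> - l"
        by (intro tendsto_diff bounded_linear.tendsto[OF sm_bl] flim lim)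
      then have l2: "(\<lambda>n. ip q (sm w (f n) - x n)) \<longlonglongrightarrow> ip q (sm w \<phi> - l)" by (rule tendsto_ip_right)
      have "(\<lambda>n. ip (A q) (f n)) = (\<lambda>n. ip q (sm w (f n) - x n))" using e by simp
      with l1 have "(\<lambda>n. ip q (sm w (f n) - x n)) \<longlonglongrightarrow> ip (A q) \<phi>" by simp
      from LIMSEQ_unique[OF this l2] show ?thesis .
    qed
    have pD: "\<phi> \<in> D" using A_adj key by blast
    have "A \<phi> - (sm w \<phi> - l) = 0"
    proof (rule orth_dense_zero[OF Ddense])
      fix s assume s: "s \<in> D"
      have "ip s (A \<phi> - (sm w \<phi> - l)) = 0"
        using key[OF s] A_sym[OF s pD] by (simp add: ip_diff_right)
      then show "ip (A \<phi> - (sm w \<phi> - l)) s = 0" by (subst ip_cnj) simp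
    qed
    then have "l = sm w \<phi> - A \<phi>" by (simp add: algebra_simps)
    then show "l \<in> {sm w \<phi> - A \<phi> |\<phi>. \<phi> \<in> D}" using pD by blast
  qed
qed

lemma resolvent_ex1:
  assumes ok: "OK w"
  shows "\<exists>!\<phi>. \<phi> \<in> D \<and> sm w \<phi> - A \<phi> = \<psi>"
proof -
  have g: "good w" and gc: "good (cnj w)" using OK_good OK_cnj ok by auto
  obtain \<delta> where d: "\<delta> > 0" and db0: "\<forall>\<phi>\<in>D. \<delta> * norm \<phi> \<le> norm (sm w \<phi> - A \<phi>)"
    using g unfolding good_def by auto
  have db: "\<And>\<phi>. \<phi> \<in> D \<Longrightarrow> \<delta> * norm \<phi> \<le> norm (sm w \<phi> - A \<phi>)" using db0 by simp
  obtain \<delta>' where d': "\<delta>' > 0" and db'0: "\<forall>\<phi>\<in>D. \<delta>' * norm \<phi> \<le> norm (sm (cnj w) \<phi> - A \<phi>)"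
    using gc unfolding good_def by auto
  have db': "\<And>\<phi>. \<phi> \<in> D \<Longrightarrow> \<delta>' * norm \<phi> \<le> norm (sm (cnj w) \<phi> - A \<phi>)" using db'0 by simp
  define R where "R = {sm w \<phi> - A \<phi> | \<phi>. \<phi> \<in> D}"
  have RS: "csubspace_on sm R" unfolding csubspace_on_def R_def
  proof (intro conjI ballI allI)
    show "0 \<in> {sm w \<phi> - A \<phi> |\<phi>. \<phi> \<in> D}" using D0 A0 by force
    fix x y assume "x \<in> {sm w \<phi> - A \<phi> |\<phi>. \<phi> \<in> D}" "y \<in> {sm w \<phi> - A \<phi> |\<phi>. \<phi> \<in> D}"
    then obtain a b where "a \<in> D" "b \<in> D" "x = sm w a - A a" "y = sm w b - A b" by blast
    then show "x + y \<in> {sm w \<phi> - A \<phi> |\<phi>. \<phi> \<in> D}"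
      by (intro CollectI exI[of _ "a + b"]) (auto simp: Dadd A_add sm_add_right)
  next
    fix c x assume "x \<in> {sm w \<phi> - A \<phi> |\<phi>. \<phi> \<in> D}"
    then obtain a where "a \<in> D" "x = sm w a - A a" by blast
    then show "sm c x \<in> {sm w \<phi> - A \<phi> |\<phi>. \<phi> \<in> D}"
      by (intro CollectI exI[of _ "sm c a"]) (auto simp: Dsm A_sm sm_diff_right sm_assoc mult.commute)
  qed
  have Rc: "closed R" unfolding R_def by (rule good_closed_range[OF g])
  obtain p where pR: "p \<in> R" and orth: "\<And>m. m \<in> R \<Longrightarrow> ip (\<psi> - p) m = 0"
    using projection[OF RS Rc, of \<psi>] by blast
  define v where "v = \<psi> - p"
  have vo: "ip (sm w \<phi> - A \<phi>) v = 0" if "\<phi> \<in> D" for \<phi>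
  proof -
    have "ip v (sm w \<phi> - A \<phi>) = 0" using orth that by (auto simp: v_def R_def)
    then show ?thesis by (subst ip_cnj) simp
  qed
  have adj: "ip (A \<phi>) v = ip \<phi> (sm (cnj w) v)" if "\<phi> \<in> D" for \<phi>
    using vo[OF that] by (simp add: ip_diff_left ip_sm_left ip_sm_right)
  have vD: "v \<in> D" using A_adj adj by blast
  have "A v - sm (cnj w) v = 0"
  proof (rule orth_dense_zero[OF Ddense])
    fix s assume s: "s \<in> D"
    have "ip s (A v - sm (cnj w) v) = 0" using adj[OF s] A_sym[OF s vD] by (simp add: ip_diff_right)
    then show "ip (A v - sm (cnj w) v) s = 0" by (subst ip_cnj) simp
  qed
  then have "sm (cnj w) v - A v = 0" by simp
  then have "v = 0" using db'[OF vD] d' by (auto simp: mult_le_0_iff)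
  then have "\<psi> \<in> R" using pR by (simp add: v_def)
  then obtain \<phi> where ex: "\<phi> \<in> D" "sm w \<phi> - A \<phi> = \<psi>" by (auto simp: R_def)
  have un: "\<phi>' = \<phi>" if "\<phi>' \<in> D" "sm w \<phi>' - A \<phi>' = \<psi>" for \<phi>'
  proof -
    have "sm w (\<phi>' - \<phi>) - A (\<phi>' - \<phi>) = 0"
      using that ex A_diff[OF that(1) ex(1)] by (simp add: sm_diff_right algebra_simps)
    then have "\<phi>' - \<phi> = 0" using db[OF Ddiff[OF that(1) ex(1)]] d by (auto simp: mult_le_0_iff)
    then show ?thesis by simp
  qed
  show ?thesis using ex un by blast
qed

abbreviation "RR w \<equiv> resolv sm D A w"

lemma R_prop: assumes "OK w" shows "RR w \<psi> \<in> D \<and> sm w (RR w \<psi>) - A (RR w \<psi>) = \<psi>"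
  unfolding resolv_def by (rule theI'[OF resolvent_ex1[OF assms]])
lemma R_in: "OK w \<Longrightarrow> RR w \<psi> \<in> D" using R_prop by blast
lemma R_eq: "OK w \<Longrightarrow> sm w (RR w \<psi>) - A (RR w \<psi>) = \<psi>" using R_prop by blast
lemma R_unique: "OK w \<Longrightarrow> \<phi> \<in> D \<Longrightarrow> sm w \<phi> - A \<phi> = \<psi> \<Longrightarrow> RR w \<psi> = \<phi>"
  unfolding resolv_def by (rule the1_equality[OF resolvent_ex1]) auto

lemma R_add: "OK w \<Longrightarrow> RR w (x + y) = RR w x + RR w y"
proof (rule R_unique)
  assume ok: "OK w"
  show "RR w x + RR w y \<in> D" using Dadd R_in ok by blast
  have "sm w (RR w x + RR w y) - A (RR w x + RR w y)
     = (sm w (RR w x) - A (RR w x)) + (sm w (RR w y) - A (RR w y))"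
    unfolding A_add[OF R_in[OF ok] R_in[OF ok]] sm_add_right by (simp add: algebra_simps)
  also have "\<dots> = x + y" by (simp only: R_eq[OF ok])
  finally show "sm w (RR w x + RR w y) - A (RR w x + RR w y) = x + y" .
qed
lemma R_sm: "OK w \<Longrightarrow> RR w (sm a x) = sm a (RR w x)"
proof (rule R_unique)
  assume ok: "OK w"
  show "sm a (RR w x) \<in> D" using Dsm R_in ok by blast
  have "sm w (sm a (RR w x)) - A (sm a (RR w x)) = sm a (sm w (RR w x) - A (RR w x))"
    using A_sm[OF R_in[OF ok]] by (simp add: sm_assoc sm_diff_right mult.commute)
  then show "sm w (sm a (RR w x)) - A (sm a (RR w x)) = sm a x" using R_eq[OF ok] by simp
qed
lemma R_zero: "OK w \<Longrightarrow> RR w 0 = 0"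
  using R_sm[of w 0 0] by simp
lemma R_minus: "OK w \<Longrightarrow> RR w (- x) = - RR w x"
  using R_sm[of w "-1" x] by (simp add: sm_minus_left)
lemma R_diff: "OK w \<Longrightarrow> RR w (x - y) = RR w x - RR w y"
  using R_add[of w x "-y"] R_minus[of w y] by simp

lemma R_bound: assumes ok: "OK w" shows "\<exists>C>0. \<forall>\<psi>. norm (RR w \<psi>) \<le> C * norm \<psi>"
proof -
  obtain \<delta> where d: "\<delta> > 0" and db0: "\<forall>\<phi>\<in>D. \<delta> * norm \<phi> \<le> norm (sm w \<phi> - A \<phi>)"
    using OK_good[OF ok] unfolding good_def by auto
  have db: "\<And>\<phi>. \<phi> \<in> D \<Longrightarrow> \<delta> * norm \<phi> \<le> norm (sm w \<phi> - A \<phi>)" using db0 by simp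
  have "norm (RR w \<psi>) \<le> (1/\<delta>) * norm \<psi>" for \<psi>
    using db[OF R_in[OF ok]] R_eq[OF ok] d by (simp add: field_simps)
  then show ?thesis using d by (intro exI[of _ "1/\<delta>"]) auto
qed

lemma graph_norm_le: "graph_norm A \<phi> \<le> norm \<phi> + norm (A \<phi>)"
  unfolding graph_norm_def by (rule real_le_lsqrt) (auto simp: power2_sum)

end



section \<open>Vectors and matrices\<close>

lemma norm_le_sum_vec: "norm (x :: complex ^ 'n::finite) \<le> (\<Sum>i\<in>UNIV. norm (x $ i))"
  unfolding norm_vec_def by (rule L2_set_le_sum) auto

lemma cinner_add_right: "cinner_vec x (y + z) = cinner_vec x y + cinner_vec x z"
  by (simp add: cinner_vec_def distrib_left sum.distrib)
lemma cinner_add_left: "cinner_vec (x + y) z = cinner_vec x z + cinner_vec y z"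
  by (simp add: cinner_vec_def distrib_right sum.distrib)
lemma cinner_diff_right: "cinner_vec x (y - z) = cinner_vec x y - cinner_vec x z"
  by (simp add: cinner_vec_def right_diff_distrib sum_subtractf)
lemma cinner_diff_left: "cinner_vec (x - y) z = cinner_vec x z - cinner_vec y z"
  by (simp add: cinner_vec_def left_diff_distrib sum_subtractf)
lemma cinner_smult_right: "cinner_vec x (a *s y) = a * cinner_vec x y"
  by (simp add: cinner_vec_def sum_distrib_left algebra_simps)
lemma cinner_smult_left: "cinner_vec (a *s x) y = cnj a * cinner_vec x y"
  by (simp add: cinner_vec_def sum_distrib_left algebra_simps)
lemma cinner_zero_right[simp]: "cinner_vec x 0 = 0" by (simp add: cinner_vec_def)
lemma cinner_zero_left[simp]: "cinner_vec 0 x = 0" by (simp add: cinner_vec_def)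
lemma cinner_cnj: "cinner_vec y x = cnj (cinner_vec x y)"
  by (simp add: cinner_vec_def mult.commute)
lemma cinner_axis: "cinner_vec x (axis i 1) = cnj (x $ i)"
  by (simp add: cinner_vec_def axis_def if_distrib cong: if_cong)

lemma cinner_bound: "cmod (cinner_vec (x :: complex ^ 'n::finite) y) \<le> real CARD('n) * norm x * norm y"
proof -
  have "cmod (cinner_vec x y) \<le> (\<Sum>i\<in>UNIV. cmod (cnj (x $ i) * y $ i))"
    unfolding cinner_vec_def by (rule norm_sum)
  also have "\<dots> \<le> (\<Sum>i\<in>(UNIV::'n set). norm x * norm y)"
    by (rule sum_mono) (simp add: norm_mult; intro mult_mono Finite_Cartesian_Product.norm_nth_le norm_ge_zero)
  also have "\<dots> = real CARD('n) * norm x * norm y" by simp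
  finally show ?thesis .
qed

lemma mat_bound: "norm ((M :: complex ^ 'n ^ 'n) *v x) \<le> (real CARD('n))\<^sup>2 * norm M * norm (x :: complex ^ 'n::finite)"
proof -
  have c: "norm ((M *v x) $ i) \<le> real CARD('n) * norm M * norm x" for i
  proof -
    have "norm ((M *v x) $ i) = norm (\<Sum>j\<in>UNIV. M $ i $ j * x $ j)" by (simp add: matrix_vector_mult_def)
    also have "\<dots> \<le> (\<Sum>j\<in>UNIV. norm (M $ i $ j * x $ j))" by (rule norm_sum)
    also have "\<dots> \<le> (\<Sum>j\<in>(UNIV::'n set). norm M * norm x)"
    proof (rule sum_mono)
      fix j
      have "norm (M $ i $ j) \<le> norm M" using Finite_Cartesian_Product.norm_nth_le[of "M $ i" j] Finite_Cartesian_Product.norm_nth_le[of M i] by linarith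
      then show "norm (M $ i $ j * x $ j) \<le> norm M * norm x"
        by (simp add: norm_mult; intro mult_mono Finite_Cartesian_Product.norm_nth_le norm_ge_zero)
    qed
    also have "\<dots> = real CARD('n) * norm M * norm x" by simp
    finally show ?thesis .
  qed
  have "norm (M *v x) \<le> (\<Sum>i\<in>UNIV. norm ((M *v x) $ i))" by (rule norm_le_sum_vec)
  also have "\<dots> \<le> (\<Sum>i\<in>(UNIV::'n set). real CARD('n) * norm M * norm x)" by (rule sum_mono) (rule c)
  also have "\<dots> = (real CARD('n))\<^sup>2 * norm M * norm x" by (simp add: power2_eq_square)
  finally show ?thesis .
qed

lemma herm_cinner: "hermitian_mat M \<Longrightarrow> cinner_vec (M *v x) y = cinner_vec x (M *v y)"
proof -
  assume h: "hermitian_mat M"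
  have "cinner_vec (M *v x) y = (\<Sum>i\<in>UNIV. \<Sum>j\<in>UNIV. cnj (M $ i $ j) * cnj (x $ j) * y $ i)"
    by (simp add: cinner_vec_def matrix_vector_mult_def sum_distrib_right)
  also have "\<dots> = (\<Sum>j\<in>UNIV. \<Sum>i\<in>UNIV. cnj (M $ i $ j) * cnj (x $ j) * y $ i)" by (rule sum.swap)
  also have "\<dots> = (\<Sum>j\<in>UNIV. \<Sum>i\<in>UNIV. cnj (x $ j) * (M $ j $ i * y $ i))"
    using h unfolding hermitian_mat_def by (intro sum.cong refl) (metis complex_cnj_cnj mult.commute mult.left_commute)
  also have "\<dots> = cinner_vec x (M *v y)"
    by (simp add: cinner_vec_def matrix_vector_mult_def sum_distrib_left)
  finally show ?thesis .
qed

lemma herm_real: "hermitian_mat M \<Longrightarrow> Im (cinner_vec x (M *v x)) = 0"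
proof -
  assume h: "hermitian_mat M"
  have "cinner_vec x (M *v x) = cinner_vec (M *v x) x" using herm_cinner[OF h] by simp
  also have "\<dots> = cnj (cinner_vec x (M *v x))" by (rule cinner_cnj)
  finally have e: "cinner_vec x (M *v x) = cnj (cinner_vec x (M *v x))" .
  show ?thesis using arg_cong[OF e, of Im] by simp
qed

lemma smult_of_real: "(complex_of_real r) *s (v :: complex ^ 'n) = r *\<^sub>R v"
  unfolding vec_eq_iff vector_smult_component vector_scaleR_component by (simp add: scaleR_conv_of_real)

lemma proj_idem: "ortho_projector P \<Longrightarrow> P *v (P *v x) = P *v x"
  unfolding ortho_projector_def by (simp add: matrix_vector_mul_assoc)




context SA begin

lemma R_scaleR: "OK w \<Longrightarrow> RR w (scaleR r x) = scaleR r (RR w x)"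
  using R_sm[of w "complex_of_real r" x] by (simp add: sm_real)

lemma gR_bound: assumes ok: "OK w" shows "\<exists>K\<ge>0. \<forall>\<psi>. graph_norm A (RR w \<psi>) \<le> K * norm \<psi>"
proof -
  obtain C where C: "C > 0" and Cb: "\<And>\<psi>. norm (RR w \<psi>) \<le> C * norm \<psi>" using R_bound[OF ok] by blast
  have "graph_norm A (RR w \<psi>) \<le> (C + cmod w * C + 1) * norm \<psi>" for \<psi>
  proof -
    have AR: "A (RR w \<psi>) = sm w (RR w \<psi>) - \<psi>" using R_eq[OF ok, of \<psi>] by (simp add: algebra_simps)
    have "norm (A (RR w \<psi>)) \<le> cmod w * norm (RR w \<psi>) + norm \<psi>"
      unfolding AR using norm_triangle_ineq4[of "sm w (RR w \<psi>)" \<psi>] by (simp add: norm_sm)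
    also have "\<dots> \<le> cmod w * (C * norm \<psi>) + norm \<psi>" using Cb[of \<psi>] by (simp add: mult_left_mono)
    finally have "norm (A (RR w \<psi>)) \<le> cmod w * (C * norm \<psi>) + norm \<psi>" .
    then show ?thesis using graph_norm_le[of "RR w \<psi>"] Cb[of \<psi>] by (simp add: algebra_simps)
  qed
  then show ?thesis using C by (intro exI[of _ "C + cmod w * C + 1"]) auto
qed

end

locale ADM = SA sm ip D A for sm :: "complex \<Rightarrow> 'h::banach \<Rightarrow> 'h" and ip D A +
  fixes \<tau> :: "'h \<Rightarrow> complex ^ 'n::finite"
  assumes ADMa: "admissible sm D A \<tau>"
begin

lemma tau_add: "x \<in> D \<Longrightarrow> y \<in> D \<Longrightarrow> \<tau> (x + y) = \<tau> x + \<tau> y" using ADMa unfolding admissible_def by blast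
lemma tau_sm: "x \<in> D \<Longrightarrow> \<tau> (sm a x) = a *s \<tau> x" using ADMa unfolding admissible_def by blast
lemma tau_surj: "\<exists>\<phi>\<in>D. \<tau> \<phi> = v" using ADMa unfolding admissible_def by (metis UNIV_I imageE)
lemma tau_bnd0: "\<exists>C. \<forall>\<phi>\<in>D. norm (\<tau> \<phi>) \<le> C * graph_norm A \<phi>" using ADMa unfolding admissible_def by blast
lemma ker_dense: "closure {\<phi>\<in>D. \<tau> \<phi> = 0} = UNIV" using ADMa unfolding admissible_def by blast

lemma tau_bnd: "\<exists>C\<ge>0. \<forall>\<phi>\<in>D. norm (\<tau> \<phi>) \<le> C * graph_norm A \<phi>"
proof -
  obtain C where C: "\<forall>\<phi>\<in>D. norm (\<tau> \<phi>) \<le> C * graph_norm A \<phi>" using tau_bnd0 by blast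
  have "norm (\<tau> \<phi>) \<le> max C 0 * graph_norm A \<phi>" if "\<phi> \<in> D" for \<phi>
  proof -
    have "0 \<le> graph_norm A \<phi>" unfolding graph_norm_def by simp
    then have "C * graph_norm A \<phi> \<le> max C 0 * graph_norm A \<phi>" by (simp add: mult_right_mono)
    then show ?thesis using C that by fastforce
  qed
  then show ?thesis by (intro exI[of _ "max C 0"]) auto
qed

lemma tau_zero: "\<tau> 0 = 0" using tau_sm[OF D0, of 0] by simp
lemma tau_minus: "x \<in> D \<Longrightarrow> \<tau> (- x) = - \<tau> x"
  using tau_sm[of x "-1"] by (simp add: sm_minus_left)
lemma tau_diff: "x \<in> D \<Longrightarrow> y \<in> D \<Longrightarrow> \<tau> (x - y) = \<tau> x - \<tau> y"
  using tau_add[of x "-y"] tau_minus[of y] Dminus[of y] by simp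
lemma tau_scaleR: "x \<in> D \<Longrightarrow> \<tau> (scaleR r x) = scaleR r (\<tau> x)"
  using tau_sm[of x "complex_of_real r"] by (simp add: sm_real smult_of_real)

lemma tauR_bound: assumes ok: "OK w" shows "\<exists>C\<ge>0. \<forall>\<psi>. norm (\<tau> (RR w \<psi>)) \<le> C * norm \<psi>"
proof -
  obtain C where C: "C \<ge> 0" and Cb: "\<And>\<phi>. \<phi> \<in> D \<Longrightarrow> norm (\<tau> \<phi>) \<le> C * graph_norm A \<phi>" using tau_bnd by blast
  obtain K where K: "K \<ge> 0" and Kb: "\<And>\<psi>. graph_norm A (RR w \<psi>) \<le> K * norm \<psi>" using gR_bound[OF ok] by blast
  have "norm (\<tau> (RR w \<psi>)) \<le> (C * K) * norm \<psi>" for \<psi>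
    using Cb[OF R_in[OF ok]] mult_left_mono[OF Kb C] by (simp add: mult.assoc) (metis order_trans)
  then show ?thesis using C K by (intro exI[of _ "C * K"]) auto
qed

definition G :: "complex ^ 'n \<Rightarrow> 'h" where "G \<xi> = Gmap sm ip D A \<tau> 0 \<xi>"

lemma OK0: "OK 0" unfolding OK_def by simp

lemma G_ex1: "\<exists>!g. \<forall>\<psi>. ip g \<psi> = cinner_vec \<xi> (\<tau> (RR 0 \<psi>))"
proof -
  obtain C where C: "C \<ge> 0" and Cb: "\<And>\<psi>. norm (\<tau> (RR 0 \<psi>)) \<le> C * norm \<psi>" using tauR_bound[OF OK0] by blast
  have ex: "\<exists>g. \<forall>\<psi>. ip g \<psi> = cinner_vec \<xi> (\<tau> (RR 0 \<psi>))"
  proof (rule riesz)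
    show "cinner_vec \<xi> (\<tau> (RR 0 (x + y))) = cinner_vec \<xi> (\<tau> (RR 0 x)) + cinner_vec \<xi> (\<tau> (RR 0 y))" for x y
      by (simp add: R_add[OF OK0] tau_add R_in[OF OK0] cinner_add_right)
    show "cinner_vec \<xi> (\<tau> (RR 0 (sm a x))) = a * cinner_vec \<xi> (\<tau> (RR 0 x))" for a x
      by (simp add: R_sm[OF OK0] tau_sm R_in[OF OK0] cinner_smult_right)
    show "cmod (cinner_vec \<xi> (\<tau> (RR 0 x))) \<le> (real CARD('n) * norm \<xi> * C) * norm x" for x
    proof -
      have "cmod (cinner_vec \<xi> (\<tau> (RR 0 x))) \<le> real CARD('n) * norm \<xi> * norm (\<tau> (RR 0 x))" by (rule cinner_bound)
      also have "\<dots> \<le> real CARD('n) * norm \<xi> * (C * norm x)" using Cb[of x] by (simp add: mult_left_mono)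
      finally show ?thesis by (simp add: mult.assoc)
    qed
  qed
  moreover have "g = g'" if "\<forall>\<psi>. ip g \<psi> = cinner_vec \<xi> (\<tau> (RR 0 \<psi>))" "\<forall>\<psi>. ip g' \<psi> = cinner_vec \<xi> (\<tau> (RR 0 \<psi>))" for g g'
  proof -
    have "ip (g - g') \<psi> = 0" for \<psi> using that by (simp add: ip_diff_left)
    then show ?thesis using ip_eq_all[of "g - g'"] by simp
  qed
  ultimately show ?thesis by blast
qed

lemma G_prop: "ip (G \<xi>) \<psi> = cinner_vec \<xi> (\<tau> (RR 0 \<psi>))"
proof -
  have "\<forall>\<psi>. ip (G \<xi>) \<psi> = cinner_vec \<xi> (\<tau> (RR 0 \<psi>))"
    unfolding G_def Gmap_def complex_cnj_zero by (rule theI'[OF G_ex1])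
  then show ?thesis by blast
qed

lemma G_unique: "(\<And>\<psi>. ip g \<psi> = cinner_vec \<xi> (\<tau> (RR 0 \<psi>))) \<Longrightarrow> G \<xi> = g"
  using G_ex1[of \<xi>] G_prop[of \<xi>] by blast

lemma G_add: "G (\<xi> + \<eta>) = G \<xi> + G \<eta>"
  by (rule G_unique) (simp add: ip_add_left G_prop cinner_add_left)
lemma G_smult: "G (a *s \<xi>) = sm a (G \<xi>)"
  by (rule G_unique) (simp add: ip_sm_left G_prop cinner_smult_left)
lemma G_zero: "G 0 = 0" using G_smult[of 0 0] by simp
lemma G_minus: "G (- \<xi>) = - G \<xi>"
  using G_smult[of "-1" \<xi>] by (simp add: sm_minus_left)
lemma G_diff: "G (\<xi> - \<eta>) = G \<xi> - G \<eta>"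
  using G_add[of \<xi> "-\<eta>"] G_minus[of \<eta>] by simp
lemma G_scaleR: "G (scaleR r \<xi>) = scaleR r (G \<xi>)"
  using G_smult[of "complex_of_real r" \<xi>] by (simp add: sm_real smult_of_real)

lemma G_bound: "\<exists>C\<ge>0. \<forall>\<xi>. norm (G \<xi>) \<le> C * norm \<xi>"
proof -
  obtain C where C: "C \<ge> 0" and Cb: "\<And>\<psi>. norm (\<tau> (RR 0 \<psi>)) \<le> C * norm \<psi>" using tauR_bound[OF OK0] by blast
  have "norm (G \<xi>) \<le> (real CARD('n) * C) * norm \<xi>" for \<xi>
  proof -
    have "(norm (G \<xi>))\<^sup>2 = Re (ip (G \<xi>) (G \<xi>))" by (simp add: Re_ip_self)
    also have "\<dots> \<le> cmod (ip (G \<xi>) (G \<xi>))" by (rule complex_Re_le_cmod)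
    also have "\<dots> = cmod (cinner_vec \<xi> (\<tau> (RR 0 (G \<xi>))))" by (simp add: G_prop)
    also have "\<dots> \<le> real CARD('n) * norm \<xi> * norm (\<tau> (RR 0 (G \<xi>)))" by (rule cinner_bound)
    also have "\<dots> \<le> real CARD('n) * norm \<xi> * (C * norm (G \<xi>))" using Cb by (simp add: mult_left_mono)
    finally have h: "(norm (G \<xi>))\<^sup>2 \<le> (real CARD('n) * C * norm \<xi>) * norm (G \<xi>)" by (simp add: algebra_simps)
    show ?thesis
    proof (cases "G \<xi> = 0")
      case True then show ?thesis using C by simp
    next
      case False then have "norm (G \<xi>) > 0" by simp
      with h show ?thesis by (simp add: power2_eq_square algebra_simps)
    qed
  qed
  then show ?thesis using C by (intro exI[of _ "real CARD('n) * C"]) auto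
qed

lemma R0_A: "\<phi> \<in> D \<Longrightarrow> RR 0 (- A \<phi>) = \<phi>"
  by (rule R_unique[OF OK0]) auto

lemma G_key: "\<phi> \<in> D \<Longrightarrow> ip (G \<xi>) (- A \<phi>) = cinner_vec \<xi> (\<tau> \<phi>)"
  by (simp add: G_prop R0_A)

lemma G_inD: assumes "G \<eta> \<in> D" shows "\<eta> = 0"
proof -
  define d where "d = G \<eta>"
  have dD: "d \<in> D" using assms by (simp add: d_def)
  have e: "ip (- A d) \<phi> = cinner_vec \<eta> (\<tau> \<phi>)" if "\<phi> \<in> D" for \<phi>
  proof -
    have "ip (- A d) \<phi> = - ip d (A \<phi>)" using A_sym[OF dD that] by (simp add: ip_minus_left)
    also have "\<dots> = ip d (- A \<phi>)" by (simp add: ip_minus_right)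
    finally show ?thesis using G_key[OF that] by (simp add: d_def)
  qed
  have "- A d = 0"
  proof (rule orth_dense_zero[OF ker_dense])
    fix s assume "s \<in> {\<phi> \<in> D. \<tau> \<phi> = 0}"
    then show "ip (- A d) s = 0" using e by simp
  qed
  then have z: "cinner_vec \<eta> (\<tau> \<phi>) = 0" if "\<phi> \<in> D" for \<phi> using e[OF that] by simp
  have "\<eta> $ i = 0" for i
  proof -
    obtain \<phi> where "\<phi> \<in> D" "\<tau> \<phi> = axis i 1" using tau_surj by blast
    then have "cnj (\<eta> $ i) = 0" using z cinner_axis by metis
    then show ?thesis by simp
  qed
  then show ?thesis by (simp add: vec_eq_iff)
qed

lemma decomp_unique:
  assumes "\<phi>0 \<in> D" "\<phi>1 \<in> D" "\<phi>0 + G \<xi>0 = \<phi>1 + G \<xi>1"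
  shows "\<xi>0 = \<xi>1 \<and> \<phi>0 = \<phi>1"
proof -
  have "G (\<xi>0 - \<xi>1) = \<phi>1 - \<phi>0" using assms(3) by (simp add: G_diff algebra_simps)
  then have "G (\<xi>0 - \<xi>1) \<in> D" using Ddiff[OF assms(2,1)] by simp
  then have "\<xi>0 - \<xi>1 = 0" by (rule G_inD)
  then have "\<xi>0 = \<xi>1" by simp
  then show ?thesis using assms(3) by simp
qed

end




locale EXT = ADM sm ip D A \<tau> for sm :: "complex \<Rightarrow> 'h::banach \<Rightarrow> 'h" and ip D A
  and \<tau> :: "'h \<Rightarrow> complex ^ 'n::finite" +
  fixes P :: "complex ^ 'n ^ 'n" and \<Theta> :: "complex ^ 'n ^ 'n" and z :: complex
  assumes OP: "ortho_projector P" and SYM: "symmetric_on_ran P \<Theta>" and Imz: "Im z \<noteq> 0"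
begin

lemma OKz: "OK z" using Imz unfolding OK_def by simp
lemma P_herm: "hermitian_mat P" using OP unfolding ortho_projector_def by blast
lemma Th_herm: "hermitian_mat \<Theta>" using SYM unfolding symmetric_on_ran_def by blast
lemma P_Th: "P *v (\<Theta> *v x) = \<Theta> *v x"
  using SYM unfolding symmetric_on_ran_def by (simp add: matrix_vector_mul_assoc)
lemma PP: "P *v (P *v x) = P *v x" using proj_idem[OF OP] .

definition Lm :: "complex ^ 'n \<Rightarrow> complex ^ 'n" where
  "Lm \<xi> = \<Theta> *v \<xi> + z *s (P *v \<tau> (RR z (G \<xi>)))"

lemma tRG_add: "\<tau> (RR z (G (x + y))) = \<tau> (RR z (G x)) + \<tau> (RR z (G y))"
  by (simp add: G_add R_add[OF OKz] tau_add R_in[OF OKz])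
lemma tRG_scaleR: "\<tau> (RR z (G (r *\<^sub>R x))) = r *\<^sub>R \<tau> (RR z (G x))"
  by (simp add: G_scaleR R_scaleR[OF OKz] tau_scaleR R_in[OF OKz])

lemma smult_scaleR_comm: "(c::complex) *s (r *\<^sub>R v) = r *\<^sub>R (c *s (v :: complex ^ 'n))"
  by (simp add: vec_eq_iff)

lemma mv_scaleR: "(M :: complex ^ 'n ^ 'n) *v (r *\<^sub>R x) = r *\<^sub>R (M *v x)"
  using vector_scalar_commute[of M "complex_of_real r" x] by (simp add: smult_of_real)

lemma Lm_add: "Lm (x + y) = Lm x + Lm y"
  unfolding Lm_def tRG_add by (simp add: matrix_vector_right_distrib vector_add_ldistrib algebra_simps)
lemma Lm_scaleR: "Lm (r *\<^sub>R x) = r *\<^sub>R Lm x"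
  unfolding Lm_def tRG_scaleR by (simp add: mv_scaleR smult_scaleR_comm scaleR_right_distrib)
lemma Lm_zero: "Lm 0 = 0" using Lm_scaleR[of 0 0] by simp
lemma Lm_diff: "Lm (x - y) = Lm x - Lm y"
  using Lm_add[of "x - y" y] by (simp add: algebra_simps)

lemma P_Lm: "P *v Lm \<xi> = Lm \<xi>"
  unfolding Lm_def by (simp add: matrix_vector_right_distrib P_Th vector_scalar_commute PP)

definition L' :: "complex ^ 'n \<Rightarrow> complex ^ 'n" where
  "L' x = Lm (P *v x) + (x - P *v x)"

lemma L'_ran: "P *v \<xi> = \<xi> \<Longrightarrow> L' \<xi> = Lm \<xi>" unfolding L'_def by simp

lemma L'_linear: "linear L'"
proof (rule linearI)
  show "L' (x + y) = L' x + L' y" for x y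
    unfolding L'_def by (simp add: matrix_vector_right_distrib Lm_add algebra_simps)
  show "L' (r *\<^sub>R x) = r *\<^sub>R L' x" for r x
    unfolding L'_def by (simp add: mv_scaleR Lm_scaleR algebra_simps)
qed

lemma calc: "P *v \<tau> (RR z (\<psi> - sm z (G \<xi>))) = P *v \<tau> (RR z \<psi>) - z *s (P *v \<tau> (RR z (G \<xi>)))"
  by (simp add: R_diff[OF OKz] R_sm[OF OKz] tau_diff tau_sm R_in[OF OKz] Dsm
      matrix_vector_mult_diff_distrib vector_scalar_commute)

lemma cond_iff: "P *v \<tau> (RR z (\<psi> - sm z (G \<xi>))) = \<Theta> *v \<xi> \<longleftrightarrow> Lm \<xi> = P *v \<tau> (RR z \<psi>)"
  unfolding calc Lm_def by (auto simp: algebra_simps)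

lemma Lm_inj: assumes P\<xi>: "P *v \<xi> = \<xi>" and L0: "Lm \<xi> = 0" shows "\<xi> = 0"
proof -
  define \<phi>0 where "\<phi>0 = RR z (0 - sm z (G \<xi>))"
  have \<phi>D: "\<phi>0 \<in> D" unfolding \<phi>0_def by (rule R_in[OF OKz])
  have cond: "P *v \<tau> \<phi>0 = \<Theta> *v \<xi>" unfolding \<phi>0_def cond_iff
    using L0 by (simp add: R_zero[OF OKz] tau_zero)
  define u where "u = \<phi>0 + G \<xi>"
  have "sm z \<phi>0 - A \<phi>0 = 0 - sm z (G \<xi>)" unfolding \<phi>0_def by (rule R_eq[OF OKz])
  then have Au: "A \<phi>0 = sm z u" by (simp add: u_def sm_add_right algebra_simps)
  have "ip (G \<xi>) (A \<phi>0) = - ip (G \<xi>) (- A \<phi>0)" by (simp add: ip_minus_right)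
  also have "\<dots> = - cinner_vec \<xi> (\<tau> \<phi>0)" by (simp add: G_key[OF \<phi>D])
  also have "cinner_vec \<xi> (\<tau> \<phi>0) = cinner_vec (P *v \<xi>) (\<tau> \<phi>0)" using P\<xi> by simp
  also have "\<dots> = cinner_vec \<xi> (\<Theta> *v \<xi>)" by (simp add: herm_cinner[OF P_herm] cond)
  finally have "ip (G \<xi>) (A \<phi>0) = - cinner_vec \<xi> (\<Theta> *v \<xi>)" .
  then have "Im (ip (G \<xi>) (A \<phi>0)) = 0" using herm_real[OF Th_herm, of \<xi>] by simp
  moreover have "Im (ip \<phi>0 (A \<phi>0)) = 0" by (rule ip_A_real[OF \<phi>D])
  ultimately have "Im (ip u (A \<phi>0)) = 0" by (simp add: u_def ip_add_left)
  then have "Im (z * complex_of_real ((norm u)\<^sup>2)) = 0" by (simp add: Au ip_sm_right ip_self)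
  then have "Im z * (norm u)\<^sup>2 = 0" by simp
  then have "u = 0" using Imz by simp
  then have "G \<xi> = - \<phi>0" by (simp add: u_def eq_neg_iff_add_eq_0 add.commute)
  then have "G \<xi> \<in> D" using Dminus[OF \<phi>D] by simp
  then show ?thesis by (rule G_inD)
qed

lemma L'_inj: "inj L'"
proof -
  have z0: "x = 0" if "L' x = 0" for x
  proof -
    have "P *v L' x = Lm (P *v x)" unfolding L'_def
      by (simp add: matrix_vector_right_distrib matrix_vector_mult_diff_distrib P_Lm PP)
    then have "Lm (P *v x) = 0" using that by simp
    then have Px: "P *v x = 0" using Lm_inj[OF PP] by blast
    then show "x = 0" using that unfolding L'_def by (simp add: Lm_zero)
  qed
  show ?thesis unfolding inj_def
  proof (intro allI impI)
    fix x y assume "L' x = L' y"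
    then have "L' (x - y) = 0" using linear_diff[OF L'_linear] by simp
    then show "x = y" using z0 by fastforce
  qed
qed

lemma L'_surj: "surj L'" using linear_inj_imp_surj[OF L'_linear L'_inj] .

lemma L'_below: "\<exists>\<delta>>0. \<forall>x. \<delta> * norm x \<le> norm (L' x)"
proof -
  have bl: "bounded_linear L'" using L'_linear linear_conv_bounded_linear by blast
  have "\<forall>x\<in>UNIV. L' x = 0 \<longrightarrow> x = 0" using L'_inj L'_linear by (metis inj_eq linear_0)
  from injective_imp_isometric[OF closed_UNIV subspace_UNIV bl this] show ?thesis by auto
qed

lemma solve: "\<exists>\<xi>. P *v \<xi> = \<xi> \<and> Lm \<xi> = P *v v"
proof -
  obtain x where x: "L' x = P *v v" using L'_surj by (metis surjD)
  have "P *v L' x = Lm (P *v x)" unfolding L'_def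
    by (simp add: matrix_vector_right_distrib matrix_vector_mult_diff_distrib P_Lm PP)
  then have "Lm (P *v x) = P *v v" using x PP by simp
  then show ?thesis using PP by blast
qed

lemma ext_op_val:
  assumes "\<phi>0 \<in> D" "P *v \<xi> = \<xi>" "P *v \<tau> \<phi>0 = \<Theta> *v \<xi>"
  shows "ext_op sm ip D A \<tau> P \<Theta> (\<phi>0 + G \<xi>) = A \<phi>0"
  unfolding ext_op_def G_def[symmetric]
proof (rule someI2[where a = \<phi>0])
  show "\<phi>0 \<in> D \<and> (\<exists>\<xi>'. P *v \<xi>' = \<xi>' \<and> P *v \<tau> \<phi>0 = \<Theta> *v \<xi>' \<and> \<phi>0 + G \<xi> = \<phi>0 + G \<xi>')"
    using assms by blast
  fix \<phi>1 assume "\<phi>1 \<in> D \<and> (\<exists>\<xi>'. P *v \<xi>' = \<xi>' \<and> P *v \<tau> \<phi>1 = \<Theta> *v \<xi>' \<and> \<phi>0 + G \<xi> = \<phi>1 + G \<xi>')"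
  then obtain \<xi>' where "\<phi>1 \<in> D" "\<phi>0 + G \<xi> = \<phi>1 + G \<xi>'" by blast
  then have "\<phi>1 = \<phi>0" using decomp_unique[OF assms(1)] by metis
  then show "A \<phi>1 = A \<phi>0" by simp
qed

lemma ext_resolv:
  assumes P\<xi>: "P *v \<xi> = \<xi>" and L\<xi>: "Lm \<xi> = P *v \<tau> (RR z \<psi>)"
  shows "resolv sm (ext_dom sm ip D A \<tau> P \<Theta>) (ext_op sm ip D A \<tau> P \<Theta>) z \<psi> = RR z (\<psi> - sm z (G \<xi>)) + G \<xi>"
proof -
  define \<phi>0 where "\<phi>0 = RR z (\<psi> - sm z (G \<xi>))"
  define u where "u = \<phi>0 + G \<xi>"
  have \<phi>D: "\<phi>0 \<in> D" unfolding \<phi>0_def by (rule R_in[OF OKz])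
  have cond: "P *v \<tau> \<phi>0 = \<Theta> *v \<xi>" unfolding \<phi>0_def cond_iff by (rule L\<xi>)
  have uD: "u \<in> ext_dom sm ip D A \<tau> P \<Theta>"
    unfolding ext_dom_def G_def[symmetric] u_def using \<phi>D P\<xi> cond by blast
  have opu: "ext_op sm ip D A \<tau> P \<Theta> u = A \<phi>0" unfolding u_def by (rule ext_op_val[OF \<phi>D P\<xi> cond])
  have "sm z \<phi>0 - A \<phi>0 = \<psi> - sm z (G \<xi>)" unfolding \<phi>0_def by (rule R_eq[OF OKz])
  then have equ: "sm z u - ext_op sm ip D A \<tau> P \<Theta> u = \<psi>"
    unfolding opu by (simp add: u_def sm_add_right algebra_simps)
  have uniq: "u' = u" if u'D: "u' \<in> ext_dom sm ip D A \<tau> P \<Theta>" and equ': "sm z u' - ext_op sm ip D A \<tau> P \<Theta> u' = \<psi>" for u'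
  proof -
    obtain \<phi>1 \<xi>1 where u': "u' = \<phi>1 + G \<xi>1" and \<phi>1D: "\<phi>1 \<in> D" and P1: "P *v \<xi>1 = \<xi>1"
      and c1: "P *v \<tau> \<phi>1 = \<Theta> *v \<xi>1"
    proof -
      have "\<exists>\<phi>1 \<xi>1. u' = \<phi>1 + G \<xi>1 \<and> \<phi>1 \<in> D \<and> P *v \<xi>1 = \<xi>1 \<and> P *v \<tau> \<phi>1 = \<Theta> *v \<xi>1"
        using u'D unfolding ext_dom_def G_def[symmetric] by (simp only: mem_Collect_eq)
      then show ?thesis using that by blast
    qed
    have op1: "ext_op sm ip D A \<tau> P \<Theta> u' = A \<phi>1" unfolding u' by (rule ext_op_val[OF \<phi>1D P1 c1])
    have e1: "sm z (\<phi>1 + G \<xi>1) - A \<phi>1 = \<psi>" using equ' unfolding op1 by (simp only: u')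
    have "sm z \<phi>1 - A \<phi>1 = (sm z (\<phi>1 + G \<xi>1) - A \<phi>1) - sm z (G \<xi>1)"
      by (simp add: sm_add_right)
    then have "sm z \<phi>1 - A \<phi>1 = \<psi> - sm z (G \<xi>1)" by (simp only: e1)
    then have \<phi>1e: "\<phi>1 = RR z (\<psi> - sm z (G \<xi>1))" using R_unique[OF OKz \<phi>1D] by simp
    have L1: "Lm \<xi>1 = P *v \<tau> (RR z \<psi>)" using c1 unfolding \<phi>1e cond_iff .
    have "Lm (\<xi>1 - \<xi>) = 0" using L1 L\<xi> by (simp add: Lm_diff)
    moreover have "P *v (\<xi>1 - \<xi>) = \<xi>1 - \<xi>" using P1 P\<xi> by (simp add: matrix_vector_mult_diff_distrib)
    ultimately have "\<xi>1 - \<xi> = 0" using Lm_inj by blast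
    then have "\<xi>1 = \<xi>" by simp
    then show ?thesis unfolding u' u_def \<phi>0_def \<phi>1e by simp
  qed
  have "resolv sm (ext_dom sm ip D A \<tau> P \<Theta>) (ext_op sm ip D A \<tau> P \<Theta>) z \<psi> = u"
    unfolding resolv_def
  proof (rule the_equality)
    show "u \<in> ext_dom sm ip D A \<tau> P \<Theta> \<and> sm z u - ext_op sm ip D A \<tau> P \<Theta> u = \<psi>" using uD equ by blast
    fix u' assume "u' \<in> ext_dom sm ip D A \<tau> P \<Theta> \<and> sm z u' - ext_op sm ip D A \<tau> P \<Theta> u' = \<psi>"
    then show "u' = u" using uniq by blast
  qed
  then show ?thesis by (simp add: u_def \<phi>0_def)
qed

end



lemma smult_bound: "norm ((c::complex) *s (v :: complex ^ 'n::finite)) \<le> real CARD('n) * cmod c * norm v"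
proof -
  have "norm (c *s v) \<le> (\<Sum>i\<in>UNIV. norm ((c *s v) $ i))" by (rule norm_le_sum_vec)
  also have "\<dots> \<le> (\<Sum>i\<in>(UNIV::'n set). cmod c * norm v)"
    by (rule sum_mono) (simp add: norm_mult mult_left_mono Finite_Cartesian_Product.norm_nth_le)
  finally show ?thesis by simp
qed

context SA begin

lemma graph_norm_nonneg: "0 \<le> graph_norm A \<phi>" unfolding graph_norm_def by simp
lemma graph_norm_zero: "graph_norm A \<phi> = 0 \<Longrightarrow> \<phi> = 0"
  unfolding graph_norm_def by (simp add: add_nonneg_eq_0_iff)
lemma graph_norm_scaleR: "\<phi> \<in> D \<Longrightarrow> graph_norm A (r *\<^sub>R \<phi>) = \<bar>r\<bar> * graph_norm A \<phi>"
proof -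
  assume p: "\<phi> \<in> D"
  have "(norm (r *\<^sub>R \<phi>))\<^sup>2 + (norm (A (r *\<^sub>R \<phi>)))\<^sup>2 = r\<^sup>2 * ((norm \<phi>)\<^sup>2 + (norm (A \<phi>))\<^sup>2)"
    by (simp add: A_scaleR[OF p] power_mult_distrib algebra_simps)
  then show ?thesis unfolding graph_norm_def by (simp add: real_sqrt_mult)
qed

end

locale CONV = SA sm ip D A for sm :: "complex \<Rightarrow> 'h::banach \<Rightarrow> 'h" and ip D A +
  fixes \<tau>s :: "nat \<Rightarrow> 'h \<Rightarrow> complex ^ 'n::finite" and \<tau> :: "'h \<Rightarrow> complex ^ 'n"
    and P :: "complex ^ 'n ^ 'n" and \<Theta>s :: "nat \<Rightarrow> complex ^ 'n ^ 'n" and \<Theta> :: "complex ^ 'n ^ 'n"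
    and z :: complex
  assumes admN: "\<And>N. N \<ge> 1 \<Longrightarrow> admissible sm D A (\<tau>s N)"
    and adm: "admissible sm D A \<tau>"
    and epslim: "(\<lambda>N. graph_op_norm D A (\<lambda>\<phi>. \<tau>s N \<phi> - \<tau> \<phi>)) \<longlonglongrightarrow> 0"
    and OP: "ortho_projector P"
    and symN: "\<And>N. N \<ge> 1 \<Longrightarrow> symmetric_on_ran P (\<Theta>s N)"
    and sym: "symmetric_on_ran P \<Theta>"
    and Thlim: "\<Theta>s \<longlonglongrightarrow> \<Theta>"
    and Imz: "Im z \<noteq> 0"
begin

sublocale L: EXT sm ip D A \<tau> P \<Theta> z
  by unfold_locales (use adm OP sym Imz in auto)

lemma extN: "N \<ge> 1 \<Longrightarrow> EXT sm ip D A (\<tau>s N) P (\<Theta>s N) z"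
  by unfold_locales (use admN OP symN Imz in auto)
lemma admN': "N \<ge> 1 \<Longrightarrow> ADM sm ip D A (\<tau>s N)"
  by unfold_locales (use admN in auto)

abbreviation "GN N \<equiv> ADM.G sm ip D A (\<tau>s N)"
abbreviation "LmN N \<equiv> EXT.Lm sm ip D A (\<tau>s N) P (\<Theta>s N) z"
definition "e N = \<bar>graph_op_norm D A (\<lambda>\<phi>. \<tau>s N \<phi> - \<tau> \<phi>)\<bar>"

lemma e_nonneg: "0 \<le> e N" unfolding e_def by simp
lemma e_lim: "e \<longlonglongrightarrow> 0"
  unfolding e_def using tendsto_rabs[OF epslim] by simp

lemma e_bound: assumes N: "N \<ge> 1" and p: "\<phi> \<in> D"
  shows "norm (\<tau>s N \<phi> - \<tau> \<phi>) \<le> e N * graph_norm A \<phi>"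
proof -
  interpret TN: ADM sm ip D A "\<tau>s N" using admN'[OF N] .
  define f where "f = (\<lambda>\<phi>. \<tau>s N \<phi> - \<tau> \<phi>)"
  define S where "S = {norm (f \<phi>) | \<phi>. \<phi> \<in> D \<and> graph_norm A \<phi> \<le> 1}"
  obtain C1 where C1: "C1 \<ge> 0" "\<And>\<phi>. \<phi> \<in> D \<Longrightarrow> norm (\<tau>s N \<phi>) \<le> C1 * graph_norm A \<phi>" using TN.tau_bnd by blast
  obtain C2 where C2: "C2 \<ge> 0" "\<And>\<phi>. \<phi> \<in> D \<Longrightarrow> norm (\<tau> \<phi>) \<le> C2 * graph_norm A \<phi>" using L.tau_bnd by blast
  have fb: "norm (f \<phi>) \<le> (C1 + C2) * graph_norm A \<phi>" if "\<phi> \<in> D" for \<phi>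
    using norm_triangle_ineq4[of "\<tau>s N \<phi>" "\<tau> \<phi>"] C1(2)[OF that] C2(2)[OF that]
    by (simp add: f_def algebra_simps)
  have bdd: "bdd_above S"
  proof (rule bdd_aboveI[of _ "C1 + C2"])
    fix x assume "x \<in> S"
    then obtain \<phi> where "\<phi> \<in> D" "graph_norm A \<phi> \<le> 1" "x = norm (f \<phi>)" unfolding S_def by blast
    then show "x \<le> C1 + C2" using fb[of \<phi>] mult_left_mono[of "graph_norm A \<phi>" 1 "C1 + C2"] C1 C2 by force
  qed
  show ?thesis
  proof (cases "graph_norm A \<phi> = 0")
    case True
    then have "\<phi> = 0" by (rule graph_norm_zero)
    then show ?thesis using e_nonneg[of N] graph_norm_nonneg[of 0] by (simp add: TN.tau_zero L.tau_zero)
  next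
    case False
    define g where "g = graph_norm A \<phi>"
    have g: "g > 0" using False graph_norm_nonneg[of \<phi>] by (simp add: g_def)
    define \<phi>' where "\<phi>' = (1/g) *\<^sub>R \<phi>"
    have p': "\<phi>' \<in> D" unfolding \<phi>'_def by (rule DscaleR[OF p])
    have "graph_norm A \<phi>' = 1" unfolding \<phi>'_def using g by (simp add: graph_norm_scaleR[OF p] g_def)
    then have "norm (f \<phi>') \<in> S" using p' unfolding S_def by force
    then have "norm (f \<phi>') \<le> Sup S" using bdd by (rule cSup_upper)
    moreover have "f \<phi>' = (1/g) *\<^sub>R f \<phi>"
      unfolding f_def \<phi>'_def by (simp add: TN.tau_scaleR[OF p] L.tau_scaleR[OF p] scaleR_diff_right)
    ultimately have "norm (f \<phi>) / g \<le> Sup S" using g by simp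
    moreover have "Sup S \<le> e N" unfolding e_def graph_op_norm_def S_def f_def by simp
    ultimately have "norm (f \<phi>) / g \<le> e N" by linarith
    then show ?thesis using g by (simp add: f_def g_def field_simps)
  qed
qed

definition "K0 = (SOME K. K \<ge> 0 \<and> (\<forall>\<psi>. graph_norm A (RR 0 \<psi>) \<le> K * norm \<psi>))"
lemma K0: "K0 \<ge> 0" "graph_norm A (RR 0 \<psi>) \<le> K0 * norm \<psi>"
  using someI_ex[OF gR_bound[OF L.OK0]] unfolding K0_def by auto
definition "Kz = (SOME K. K \<ge> 0 \<and> (\<forall>\<psi>. graph_norm A (RR z \<psi>) \<le> K * norm \<psi>))"
lemma Kz: "Kz \<ge> 0" "graph_norm A (RR z \<psi>) \<le> Kz * norm \<psi>"
  using someI_ex[OF gR_bound[OF L.OKz]] unfolding Kz_def by auto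
definition "CR = (SOME C. C > 0 \<and> (\<forall>\<psi>. norm (RR z \<psi>) \<le> C * norm \<psi>))"
lemma CR: "CR > 0" "norm (RR z \<psi>) \<le> CR * norm \<psi>"
  using someI_ex[OF R_bound[OF L.OKz]] unfolding CR_def by auto
definition "Ct = (SOME C. C \<ge> 0 \<and> (\<forall>\<phi>\<in>D. norm (\<tau> \<phi>) \<le> C * graph_norm A \<phi>))"
lemma Ct: "Ct \<ge> 0" "\<phi> \<in> D \<Longrightarrow> norm (\<tau> \<phi>) \<le> Ct * graph_norm A \<phi>"
  using someI_ex[OF L.tau_bnd] unfolding Ct_def by auto
definition "CG = (SOME C. C \<ge> 0 \<and> (\<forall>\<xi>. norm (L.G \<xi>) \<le> C * norm \<xi>))"
lemma CG: "CG \<ge> 0" "norm (L.G \<xi>) \<le> CG * norm \<xi>"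
  using someI_ex[OF L.G_bound] unfolding CG_def by auto
definition "dl = (SOME d. d > 0 \<and> (\<forall>x. d * norm x \<le> norm (L.L' x)))"
lemma dl: "dl > 0" "dl * norm x \<le> norm (L.L' x)"
  using someI_ex[OF L.L'_below] unfolding dl_def by auto

definition "gam N = real CARD('n) * e N * K0"

lemma G_diff_bound: assumes N: "N \<ge> 1" shows "norm (GN N y - L.G y) \<le> gam N * norm y"
proof -
  interpret TN: ADM sm ip D A "\<tau>s N" using admN'[OF N] .
  define g where "g = GN N y - L.G y"
  have ipg: "ip g \<psi> = cinner_vec y (\<tau>s N (RR 0 \<psi>) - \<tau> (RR 0 \<psi>))" for \<psi>
    unfolding g_def by (simp add: ip_diff_left TN.G_prop L.G_prop cinner_diff_right)
  have "(norm g)\<^sup>2 = Re (ip g g)" by (simp add: Re_ip_self)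
  also have "\<dots> \<le> cmod (ip g g)" by (rule complex_Re_le_cmod)
  also have "\<dots> \<le> real CARD('n) * norm y * norm (\<tau>s N (RR 0 g) - \<tau> (RR 0 g))" unfolding ipg by (rule cinner_bound)
  also have "\<dots> \<le> real CARD('n) * norm y * (e N * (K0 * norm g))"
  proof -
    have "norm (\<tau>s N (RR 0 g) - \<tau> (RR 0 g)) \<le> e N * graph_norm A (RR 0 g)" by (rule e_bound[OF N R_in[OF L.OK0]])
    also have "\<dots> \<le> e N * (K0 * norm g)" by (rule mult_left_mono[OF K0(2) e_nonneg])
    finally show ?thesis by (simp add: mult_left_mono)
  qed
  finally have h: "(norm g)\<^sup>2 \<le> (gam N * norm y) * norm g" by (simp add: gam_def algebra_simps)
  show ?thesis
  proof (cases "g = 0")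
    case True then show ?thesis using K0 e_nonneg[of N] by (simp add: g_def gam_def)
  next
    case False then have "norm g > 0" by simp
    with h show ?thesis by (simp add: g_def power2_eq_square)
  qed
qed

lemma gam_nonneg: "gam N \<ge> 0" unfolding gam_def using K0 e_nonneg by simp

definition "eta N = (real CARD('n))\<^sup>2 * norm (\<Theta>s N - \<Theta>) + real CARD('n) * cmod z * ((real CARD('n))\<^sup>2 * norm P * ((Ct + e N) * Kz * gam N + e N * Kz * CG))"

lemma eta_nonneg: "eta N \<ge> 0"
  unfolding eta_def using Ct Kz CG e_nonneg gam_nonneg by (simp add: add_nonneg_nonneg mult_nonneg_nonneg)

lemma tauN_bound: assumes N: "N \<ge> 1" and p: "\<phi> \<in> D"
  shows "norm (\<tau>s N \<phi>) \<le> (Ct + e N) * graph_norm A \<phi>"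
proof -
  have "norm (\<tau>s N \<phi>) \<le> norm (\<tau> \<phi>) + norm (\<tau>s N \<phi> - \<tau> \<phi>)" by (metis norm_triangle_sub add.commute)
  also have "\<dots> \<le> Ct * graph_norm A \<phi> + e N * graph_norm A \<phi>" using Ct(2)[OF p] e_bound[OF N p] by linarith
  finally show ?thesis by (simp add: algebra_simps)
qed

lemma Lm_diff_bound: assumes N: "N \<ge> 1" shows "norm (LmN N x - L.Lm x) \<le> eta N * norm x"
proof -
  interpret TN: EXT sm ip D A "\<tau>s N" P "\<Theta>s N" z using extN[OF N] .
  define w where "w = \<tau>s N (RR z (GN N x)) - \<tau> (RR z (L.G x))"
  have w_eq: "w = \<tau>s N (RR z (GN N x - L.G x)) + (\<tau>s N (RR z (L.G x)) - \<tau> (RR z (L.G x)))"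
    unfolding w_def by (simp add: R_diff[OF L.OKz] TN.tau_diff R_in[OF L.OKz])
  have w1: "norm (\<tau>s N (RR z (GN N x - L.G x))) \<le> (Ct + e N) * Kz * gam N * norm x"
  proof -
    have "norm (\<tau>s N (RR z (GN N x - L.G x))) \<le> (Ct + e N) * graph_norm A (RR z (GN N x - L.G x))"
      by (rule tauN_bound[OF N R_in[OF L.OKz]])
    also have "\<dots> \<le> (Ct + e N) * (Kz * norm (GN N x - L.G x))"
      by (rule mult_left_mono[OF Kz(2)]) (use Ct e_nonneg in simp)
    also have "\<dots> \<le> (Ct + e N) * (Kz * (gam N * norm x))"
      by (rule mult_left_mono[OF mult_left_mono[OF G_diff_bound[OF N] Kz(1)]]) (use Ct e_nonneg in simp)
    finally show ?thesis by (simp add: mult.assoc)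
  qed
  have w2: "norm (\<tau>s N (RR z (L.G x)) - \<tau> (RR z (L.G x))) \<le> e N * Kz * CG * norm x"
  proof -
    have "norm (\<tau>s N (RR z (L.G x)) - \<tau> (RR z (L.G x))) \<le> e N * graph_norm A (RR z (L.G x))"
      by (rule e_bound[OF N R_in[OF L.OKz]])
    also have "\<dots> \<le> e N * (Kz * norm (L.G x))" by (rule mult_left_mono[OF Kz(2) e_nonneg])
    also have "\<dots> \<le> e N * (Kz * (CG * norm x))"
      by (rule mult_left_mono[OF mult_left_mono[OF CG(2) Kz(1)] e_nonneg])
    finally show ?thesis by (simp add: mult.assoc)
  qed
  have wb: "norm w \<le> ((Ct + e N) * Kz * gam N + e N * Kz * CG) * norm x"
    using norm_triangle_ineq[of "\<tau>s N (RR z (GN N x - L.G x))" "\<tau>s N (RR z (L.G x)) - \<tau> (RR z (L.G x))"] w1 w2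
    unfolding w_eq by (simp add: algebra_simps)
  have eq: "LmN N x - L.Lm x = (\<Theta>s N - \<Theta>) *v x + z *s (P *v w)"
    unfolding TN.Lm_def L.Lm_def w_def
    by (simp add: matrix_vector_mult_diff_rdistrib matrix_vector_mult_diff_distrib vector_ssub_ldistrib algebra_simps)
  have b1: "norm ((\<Theta>s N - \<Theta>) *v x) \<le> (real CARD('n))\<^sup>2 * norm (\<Theta>s N - \<Theta>) * norm x" by (rule mat_bound)
  have "norm (z *s (P *v w)) \<le> real CARD('n) * cmod z * norm (P *v w)" by (rule smult_bound)
  also have "\<dots> \<le> real CARD('n) * cmod z * ((real CARD('n))\<^sup>2 * norm P * norm w)" by (rule mult_left_mono[OF mat_bound]) simp
  also have "\<dots> \<le> real CARD('n) * cmod z * ((real CARD('n))\<^sup>2 * norm P * (((Ct + e N) * Kz * gam N + e N * Kz * CG) * norm x))"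
    by (rule mult_left_mono[OF mult_left_mono[OF wb]]) simp_all
  finally have b2: "norm (z *s (P *v w)) \<le> real CARD('n) * cmod z * ((real CARD('n))\<^sup>2 * norm P * ((Ct + e N) * Kz * gam N + e N * Kz * CG)) * norm x"
    by (simp add: mult.assoc)
  show ?thesis unfolding eq eta_def
    using norm_triangle_ineq[of "(\<Theta>s N - \<Theta>) *v x" "z *s (P *v w)"] b1 b2 by (simp add: algebra_simps)
qed

end



lemma onorm_nonneg_bnd:
  assumes "\<And>x. norm (f x) \<le> b * norm x"
  shows "0 \<le> onorm f"
proof -
  have bdd: "bdd_above (range (\<lambda>x. norm (f x) / norm x))"
  proof (rule bdd_aboveI[of _ "max b 0"])
    fix y assume "y \<in> range (\<lambda>x. norm (f x) / norm x)"
    then obtain x where y: "y = norm (f x) / norm x" by blast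
    show "y \<le> max b 0"
    proof (cases "x = 0")
      case True then show ?thesis using y by simp
    next
      case False then have "norm x > 0" by simp
      then have "norm (f x) / norm x \<le> b" using assms[of x] by (simp add: divide_le_eq)
      then show ?thesis using y by simp
    qed
  qed
  have "norm (f 0) / norm 0 \<le> onorm f" unfolding onorm_def using cSUP_upper[OF UNIV_I bdd, of 0] by simp
  then show ?thesis by simp
qed

context CONV begin

abbreviation "resN N \<equiv> resolv sm (ext_dom sm ip D A (\<tau>s N) P (\<Theta>s N)) (ext_op sm ip D A (\<tau>s N) P (\<Theta>s N)) z"
abbreviation "res \<equiv> resolv sm (ext_dom sm ip D A \<tau> P \<Theta>) (ext_op sm ip D A \<tau> P \<Theta>) z"

definition "c1 = (real CARD('n))\<^sup>2 * norm P * Ct * Kz / dl"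
definition "kap N = (real CARD('n))\<^sup>2 * norm P * e N * Kz"
definition "EE N = (2 / dl) * (eta N * c1 + kap N)"
definition "beta N = (1 + cmod z * CR) * (gam N * (c1 + EE N) + CG * EE N)"

lemma c1_nonneg: "c1 \<ge> 0" unfolding c1_def using Ct Kz dl by simp
lemma kap_nonneg: "kap N \<ge> 0" unfolding kap_def using Kz e_nonneg by simp
lemma EE_nonneg: "EE N \<ge> 0" unfolding EE_def using dl eta_nonneg c1_nonneg kap_nonneg by simp
lemma beta_nonneg: "beta N \<ge> 0" unfolding beta_def using CR gam_nonneg c1_nonneg EE_nonneg CG
  by (simp add: add_nonneg_nonneg mult_nonneg_nonneg)

lemma main_est:
  assumes N: "N \<ge> 1" and small: "eta N \<le> dl / 2"
  shows "norm (resN N \<psi> - res \<psi>) \<le> beta N * norm \<psi>"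
proof -
  interpret TN: EXT sm ip D A "\<tau>s N" P "\<Theta>s N" z using extN[OF N] .
  obtain \<xi> where P\<xi>: "P *v \<xi> = \<xi>" and L\<xi>: "L.Lm \<xi> = P *v \<tau> (RR z \<psi>)" using L.solve by blast
  obtain \<xi>N where P\<xi>N: "P *v \<xi>N = \<xi>N" and L\<xi>N: "LmN N \<xi>N = P *v \<tau>s N (RR z \<psi>)" using TN.solve by blast
  have r1: "res \<psi> = RR z (\<psi> - sm z (L.G \<xi>)) + L.G \<xi>" by (rule L.ext_resolv[OF P\<xi> L\<xi>])
  have r2: "resN N \<psi> = RR z (\<psi> - sm z (GN N \<xi>N)) + GN N \<xi>N" by (rule TN.ext_resolv[OF P\<xi>N L\<xi>N])
  define n2 where "n2 = (real CARD('n))\<^sup>2"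
  have n2: "n2 \<ge> 0" by (simp add: n2_def)
  have "norm (P *v \<tau> (RR z \<psi>)) \<le> n2 * norm P * norm (\<tau> (RR z \<psi>))" unfolding n2_def by (rule mat_bound)
  also have "\<dots> \<le> n2 * norm P * (Ct * (Kz * norm \<psi>))"
  proof (rule mult_left_mono)
    show "norm (\<tau> (RR z \<psi>)) \<le> Ct * (Kz * norm \<psi>)"
      using Ct(2)[OF R_in[OF L.OKz]] mult_left_mono[OF Kz(2) Ct(1)] by (meson order_trans)
  qed (use n2 in simp)
  finally have hv: "norm (P *v \<tau> (RR z \<psi>)) \<le> n2 * norm P * Ct * Kz * norm \<psi>" by (simp add: mult.assoc)
  have "dl * norm \<xi> \<le> norm (L.L' \<xi>)" by (rule dl(2))
  also have "\<dots> = norm (P *v \<tau> (RR z \<psi>))" using L.L'_ran[OF P\<xi>] L\<xi> by simp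
  finally have "dl * norm \<xi> \<le> n2 * norm P * Ct * Kz * norm \<psi>" using hv by linarith
  then have h\<xi>: "norm \<xi> \<le> c1 * norm \<psi>" using dl(1) unfolding c1_def n2_def by (simp add: field_simps)
  define d where "d = \<xi>N - \<xi>"
  have "L.L' d = L.Lm \<xi>N - L.Lm \<xi>"
    unfolding d_def linear_diff[OF L.L'_linear] L.L'_ran[OF P\<xi>] L.L'_ran[OF P\<xi>N] ..
  also have "\<dots> = - (LmN N \<xi>N - L.Lm \<xi>N) + P *v (\<tau>s N (RR z \<psi>) - \<tau> (RR z \<psi>))"
    using L\<xi> L\<xi>N by (simp add: matrix_vector_mult_diff_distrib)
  finally have Ld: "L.L' d = - (LmN N \<xi>N - L.Lm \<xi>N) + P *v (\<tau>s N (RR z \<psi>) - \<tau> (RR z \<psi>))" .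
  have k: "norm (P *v (\<tau>s N (RR z \<psi>) - \<tau> (RR z \<psi>))) \<le> kap N * norm \<psi>"
  proof -
    have "norm (P *v (\<tau>s N (RR z \<psi>) - \<tau> (RR z \<psi>))) \<le> n2 * norm P * norm (\<tau>s N (RR z \<psi>) - \<tau> (RR z \<psi>))"
      unfolding n2_def by (rule mat_bound)
    also have "\<dots> \<le> n2 * norm P * (e N * (Kz * norm \<psi>))"
    proof (rule mult_left_mono)
      show "norm (\<tau>s N (RR z \<psi>) - \<tau> (RR z \<psi>)) \<le> e N * (Kz * norm \<psi>)"
        using e_bound[OF N R_in[OF L.OKz]] mult_left_mono[OF Kz(2) e_nonneg] by (meson order_trans)
    qed (use n2 in simp)
    finally show ?thesis by (simp add: kap_def n2_def mult.assoc)
  qed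
  have "dl * norm d \<le> norm (L.L' d)" by (rule dl(2))
  also have "\<dots> \<le> norm (LmN N \<xi>N - L.Lm \<xi>N) + norm (P *v (\<tau>s N (RR z \<psi>) - \<tau> (RR z \<psi>)))"
    unfolding Ld using norm_triangle_ineq[of "- (LmN N \<xi>N - L.Lm \<xi>N)"] by (simp add: norm_minus_commute)
  also have "\<dots> \<le> eta N * norm \<xi>N + kap N * norm \<psi>" using Lm_diff_bound[OF N] k by (meson add_mono)
  finally have hd0: "dl * norm d \<le> eta N * norm \<xi>N + kap N * norm \<psi>" .
  have xiN: "norm \<xi>N \<le> norm \<xi> + norm d"
    unfolding d_def using norm_triangle_ineq[of \<xi> "\<xi>N - \<xi>"] by simp
  have "eta N * norm \<xi>N \<le> eta N * (c1 * norm \<psi> + norm d)"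
    using mult_left_mono[OF order_trans[OF xiN add_right_mono[OF h\<xi>]] eta_nonneg] .
  moreover have "eta N * norm d \<le> (dl / 2) * norm d" by (rule mult_right_mono[OF small norm_ge_zero])
  ultimately have "(dl / 2) * norm d \<le> (eta N * c1 + kap N) * norm \<psi>"
    using hd0 by (simp add: algebra_simps)
  then have hd: "norm d \<le> EE N * norm \<psi>" using dl(1) unfolding EE_def by (simp add: field_simps)
  have hxN: "norm \<xi>N \<le> (c1 + EE N) * norm \<psi>" using xiN h\<xi> hd by (simp add: algebra_simps)
  define \<Delta> where "\<Delta> = GN N \<xi>N - L.G \<xi>"
  have "\<Delta> = (GN N \<xi>N - L.G \<xi>N) + L.G d" unfolding \<Delta>_def d_def by (simp add: L.G_diff)
  then have "norm \<Delta> \<le> norm (GN N \<xi>N - L.G \<xi>N) + norm (L.G d)" by (simp add: norm_triangle_ineq)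
  also have "\<dots> \<le> gam N * norm \<xi>N + CG * norm d" using G_diff_bound[OF N] CG(2) by (meson add_mono)
  also have "\<dots> \<le> gam N * ((c1 + EE N) * norm \<psi>) + CG * (EE N * norm \<psi>)"
    using mult_left_mono[OF hxN gam_nonneg] mult_left_mono[OF hd CG(1)] by (meson add_mono)
  finally have h\<Delta>: "norm \<Delta> \<le> (gam N * (c1 + EE N) + CG * EE N) * norm \<psi>" by (simp add: algebra_simps)
  have "RR z (\<psi> - sm z (GN N \<xi>N)) - RR z (\<psi> - sm z (L.G \<xi>)) = RR z (- sm z \<Delta>)"
    unfolding R_diff[OF L.OKz, symmetric] \<Delta>_def by (simp add: sm_diff_right)
  also have "\<dots> = - sm z (RR z \<Delta>)" by (simp add: R_minus[OF L.OKz] R_sm[OF L.OKz])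
  finally have "resN N \<psi> - res \<psi> = \<Delta> - sm z (RR z \<Delta>)" unfolding r1 r2 \<Delta>_def by (simp add: algebra_simps)
  then have "norm (resN N \<psi> - res \<psi>) \<le> norm \<Delta> + cmod z * norm (RR z \<Delta>)"
    using norm_triangle_ineq4[of \<Delta> "sm z (RR z \<Delta>)"] by (simp add: norm_sm)
  also have "\<dots> \<le> norm \<Delta> + cmod z * (CR * norm \<Delta>)" using CR(2) by (simp add: mult_left_mono)
  also have "\<dots> = (1 + cmod z * CR) * norm \<Delta>" by (simp add: algebra_simps)
  also have "\<dots> \<le> (1 + cmod z * CR) * ((gam N * (c1 + EE N) + CG * EE N) * norm \<psi>)"
    using CR(1) h\<Delta> by (simp add: mult_left_mono)
  finally show ?thesis by (simp add: beta_def mult.assoc)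
qed

lemma beta_lim: "beta \<longlonglongrightarrow> 0"
proof -
  have Th: "(\<lambda>N. norm (\<Theta>s N - \<Theta>)) \<longlonglongrightarrow> 0"
    using Thlim by (simp add: tendsto_norm_zero_iff LIM_zero)
  have g: "gam \<longlonglongrightarrow> 0" unfolding gam_def using tendsto_mult[OF tendsto_mult[OF tendsto_const e_lim] tendsto_const] by simp
  have et: "eta \<longlonglongrightarrow> 0" unfolding eta_def
    by (rule tendsto_eq_intros Th e_lim g refl | simp)+
  have k: "kap \<longlonglongrightarrow> 0" unfolding kap_def by (rule tendsto_eq_intros e_lim refl | simp)+
  have E: "EE \<longlonglongrightarrow> 0" unfolding EE_def by (rule tendsto_eq_intros et k refl | simp)+
  show ?thesis unfolding beta_def by (rule tendsto_eq_intros g E refl | simp)+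
qed

lemma conv:
  "(\<lambda>N. onorm (\<lambda>\<psi>. resN N \<psi> - res \<psi>)) \<longlonglongrightarrow> 0"
proof (rule Lim_null_comparison[OF _ beta_lim])
  have "eventually (\<lambda>N. eta N < dl / 2) sequentially"
  proof -
    have et: "eta \<longlonglongrightarrow> 0" unfolding eta_def
    proof -
      have Th: "(\<lambda>N. norm (\<Theta>s N - \<Theta>)) \<longlonglongrightarrow> 0"
        using Thlim by (simp add: tendsto_norm_zero_iff LIM_zero)
      have g: "gam \<longlonglongrightarrow> 0" unfolding gam_def using tendsto_mult[OF tendsto_mult[OF tendsto_const e_lim] tendsto_const] by simp
      show "(\<lambda>N. (real CARD('n))\<^sup>2 * norm (\<Theta>s N - \<Theta>) + real CARD('n) * cmod z * ((real CARD('n))\<^sup>2 * norm P * ((Ct + e N) * Kz * gam N + e N * Kz * CG))) \<longlonglongrightarrow> 0"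
        by (rule tendsto_eq_intros Th e_lim g refl | simp)+
    qed
    show ?thesis using order_tendstoD(2)[OF et, of "dl / 2"] dl(1) by simp
  qed
  moreover have "eventually (\<lambda>N. N \<ge> 1) sequentially" by (rule eventually_ge_at_top)
  ultimately show "\<forall>\<^sub>F N in sequentially. norm (onorm (\<lambda>\<psi>. resN N \<psi> - res \<psi>)) \<le> beta N"
  proof eventually_elim
    case (elim N)
    have b: "\<And>\<psi>. norm (resN N \<psi> - res \<psi>) \<le> beta N * norm \<psi>" using main_est[of N] elim by simp
    have "0 \<le> onorm (\<lambda>\<psi>. resN N \<psi> - res \<psi>)" by (rule onorm_nonneg_bnd[OF b])
    moreover have "onorm (\<lambda>\<psi>. resN N \<psi> - res \<psi>) \<le> beta N" by (rule onorm_bound[OF beta_nonneg b])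
    ultimately show ?case by simp
  qed
qed

end

theorem lemma4p5:
  fixes sm :: "complex \<Rightarrow> 'h::banach \<Rightarrow> 'h" and ip :: "'h \<Rightarrow> 'h \<Rightarrow> complex"
    and D :: "'h set" and A :: "'h \<Rightarrow> 'h"
    and \<tau>s :: "nat \<Rightarrow> 'h \<Rightarrow> complex ^ 'n::finite" and \<tau> :: "'h \<Rightarrow> complex ^ 'n"
    and P :: "complex ^ 'n ^ 'n" and \<Theta>s :: "nat \<Rightarrow> complex ^ 'n ^ 'n" and \<Theta> :: "complex ^ 'n ^ 'n"
  assumes "complex_hilbert sm ip"
    and "self_adjoint_op sm ip D A"
    and "neg_strictly_positive ip D A"
    and "\<And>N. N \<ge> 1 \<Longrightarrow> admissible sm D A (\<tau>s N)"
    and "admissible sm D A \<tau>"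
    and "(\<lambda>N. graph_op_norm D A (\<lambda>\<phi>. \<tau>s N \<phi> - \<tau> \<phi>)) \<longlonglongrightarrow> 0"
    and "ortho_projector P"
    and "\<And>N. N \<ge> 1 \<Longrightarrow> symmetric_on_ran P (\<Theta>s N)"
    and "symmetric_on_ran P \<Theta>"
    and "\<Theta>s \<longlonglongrightarrow> \<Theta>"
  shows "norm_resolvent_conv sm
           (\<lambda>N. ext_dom sm ip D A (\<tau>s N) P (\<Theta>s N)) (\<lambda>N. ext_op sm ip D A (\<tau>s N) P (\<Theta>s N))
           (ext_dom sm ip D A \<tau> P \<Theta>) (ext_op sm ip D A \<tau> P \<Theta>)"
    unfolding norm_resolvent_conv_def
proof (intro allI impI)
  fix z :: complex assume z: "Im z \<noteq> 0"
  interpret C: CONV sm ip D A \<tau>s \<tau> P \<Theta>s \<Theta> z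
    by unfold_locales (use assms z in auto)
  show "(\<lambda>N. onorm (\<lambda>\<psi>. resolv sm (ext_dom sm ip D A (\<tau>s N) P (\<Theta>s N)) (ext_op sm ip D A (\<tau>s N) P (\<Theta>s N)) z \<psi> -
              resolv sm (ext_dom sm ip D A \<tau> P \<Theta>) (ext_op sm ip D A \<tau> P \<Theta>) z \<psi>)) \<longlonglongrightarrow> 0"
    by (rule C.conv)
qed

end
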